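(* Let $n = p_1^{\alpha_1} \cdots p_r^{\alpha_r}$ be the prime factorisation of a positive integer $n$ (distinct primes $p_i$, $\alpha_i>0$). Then \[|\det(A_n)| = \prod_{i=1}^r p_i^{\frac{n(1-p_i^{-\alpha_i})}{p_i-1}}.\]
   Context: For a positive integer $k$, let $\Phi_d$ denote the $d$th cyclotomic polynomial and let $\Psi_k : \mathbf{Z}[X]/(X^k-1) \to \bigoplus_{d \mid k} \mathbf{Z}[X]/(\Phi_d(X))$ be the natural map $f \bmod (X^k-1) \mapsto \bigoplus_{d\mid k} f \bmod \Phi_d(X)$. Endow $\mathbf{Z}[X]/(X^k-1)$ with the basis $(1, \overline{X}, \dots, \overline{X}^{k-1})$, each $\mathbf{Z}[X]/(\Phi_d(X))$ with the basis $(1, \overline{X}, \dots, \overline{X}^{\phi(d)-1})$, and order the summands by increasing $d$. $A_k$ is the $k\times k$ integer matrix of $\Psi_k$ with respect to these bases. *)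

theory Defs
  imports Complex_Main "HOL-Computational_Algebra.Polynomial" "HOL-Computational_Algebra.Primes"
    "HOL-Number_Theory.Totient" "Jordan_Normal_Form.Determinant"
begin

definition cyclotomic_complex :: "nat \<Rightarrow> complex poly" where
  "cyclotomic_complex d =
     (\<Prod>j\<in>{j\<in>{1..d}. coprime j d}. [:- cis (2 * pi * real j / real d), 1:])"

text \<open>The d-th cyclotomic polynomial as an integer polynomial (it has integer coefficients).\<close>
definition cyclotomic :: "nat \<Rightarrow> int poly" where
  "cyclotomic d = (THE p. map_poly of_int p = cyclotomic_complex d)"

text \<open>Row labels of A_k: the summands Z[X]/(Phi_d), d | k in increasing order,
  each contributing rows for the basis 1, X, ..., X^(phi(d)-1).\<close>
definition row_labels :: "nat \<Rightarrow> (nat \<times> nat) list" where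
  "row_labels k = concat (map (\<lambda>d. map (\<lambda>i. (d, i)) [0..<totient d])
                            (sorted_list_of_set {d. d dvd k}))"

text \<open>The matrix A_k: column j is the image of X^j; the entry in row (d,i) is the
  coefficient of X^i in X^j mod Phi_d (Phi_d is monic, so pseudo-division is
  ordinary division with remainder).\<close>
definition A_mat :: "nat \<Rightarrow> int mat" where
  "A_mat k = mat k k (\<lambda>(r, j). case row_labels k ! r of (d, i) \<Rightarrow>
                 coeff (pseudo_mod (monom 1 j) (cyclotomic d)) i)"

end

theory Submission
  imports Defs "Jordan_Normal_Form.Char_Poly"
begin

definition U :: "nat \<Rightarrow> complex set" where "U k = {z. z ^ k = 1}"

lemma U_finite: "n > 0 \<Longrightarrow> finite (U n)"
  unfolding U_def by (rule finite_nth_roots)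

lemma U_card: "n > 0 \<Longrightarrow> card (U n) = n"
  unfolding U_def by (rule card_roots_unity_eq)

lemma U_nz: "z \<in> U n \<Longrightarrow> n > 0 \<Longrightarrow> z \<noteq> 0"
  unfolding U_def by (auto simp: power_0_left)

lemma U_subset: "d dvd n \<Longrightarrow> U d \<subseteq> U n"
  unfolding U_def by (auto elim!: dvdE simp: power_mult)

lemma pow_gcd_one:
  fixes z :: complex
  assumes "z ^ a = 1" "z ^ b = 1" shows "z ^ gcd a b = 1"
proof (cases "a = 0")
  case True then show ?thesis using assms by simp
next
  case False
  obtain x y where xy: "a * x = b * y + gcd a b" using bezout_nat[OF False] by blast
  have "z ^ (a * x) = 1" using assms by (simp add: power_mult)
  moreover have "z ^ (a*x) = z ^ (b*y) * z ^ gcd a b" by (simp add: xy power_add)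
  moreover have "z ^ (b * y) = 1" using assms by (simp add: power_mult)
  ultimately show ?thesis by simp
qed

lemma prod_linear_dvd:
  fixes q :: "complex poly"
  assumes "finite S" "\<forall>s\<in>S. poly q s = 0"
  shows "(\<Prod>s\<in>S. [:-s,1:]) dvd q"
  using assms
proof (induction S rule: finite_induct)
  case empty then show ?case by simp
next
  case (insert a S)
  then obtain r where r: "q = (\<Prod>s\<in>S. [:-s,1:]) * r" by (auto elim: dvdE)
  have "poly q a = 0" using insert by auto
  moreover have "poly (\<Prod>s\<in>S. [:-s,1:]) a \<noteq> 0"
    using insert(1,2) by (auto simp: poly_prod)
  ultimately have "poly r a = 0" using r by simp
  then have "[:-a,1:] dvd r" by (simp add: poly_eq_0_iff_dvd)
  then have "[:-a,1:] * (\<Prod>s\<in>S. [:-s,1:]) dvd r * (\<Prod>s\<in>S. [:-s,1:])"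
    by (rule mult_dvd_mono) simp
  then show ?case using insert(1,2) r by (simp add: mult.commute)
qed

lemma monic_dvd_eq:
  fixes p q :: "complex poly"
  assumes "p dvd q" "degree p = degree q" "lead_coeff p = 1" "lead_coeff q = 1"
  shows "p = q"
proof -
  obtain c where c: "q = p * c" using assms(1) by (auto elim: dvdE)
  have q0: "q \<noteq> 0" using assms(4) by auto
  then have "p \<noteq> 0" "c \<noteq> 0" using c by auto
  then have "degree q = degree p + degree c" using c by (simp add: degree_mult_eq)
  then have "degree c = 0" using assms(2) by simp
  then obtain c0 where "c = [:c0:]" by (metis degree_eq_zeroE)
  moreover have "lead_coeff q = lead_coeff p * lead_coeff c" using c by (simp add: lead_coeff_mult)
  ultimately have "c = 1" using assms by (simp add: one_pCons)
  then show ?thesis using c by simp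
qed

lemma monom_minus_one:
  assumes "n > 0"
  shows "degree (monom (1::complex) n - 1) = n" "lead_coeff (monom (1::complex) n - 1) = 1"
proof -
  have e: "monom (1::complex) n - 1 = monom 1 n + [:-1:]" by (simp add: one_pCons)
  have "degree (monom (1::complex) n + [:-1:]) = degree (monom (1::complex) n)"
    using assms by (intro degree_add_eq_left) (simp add: degree_monom_eq)
  then show d: "degree (monom (1::complex) n - 1) = n" unfolding e by (simp add: degree_monom_eq)
  show "lead_coeff (monom (1::complex) n - 1) = 1" using assms by (simp add: d coeff_diff coeff_monom)
qed

lemma prod_U_poly:
  assumes "n > 0"
  shows "(\<Prod>\<eta>\<in>U n. [:-\<eta>,1:]) = monom 1 n - 1"
proof (rule monic_dvd_eq)
  show "(\<Prod>\<eta>\<in>U n. [:-\<eta>,1:]) dvd monom 1 n - 1"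
    using assms by (intro prod_linear_dvd U_finite) (auto simp: U_def poly_monom)
  have "degree (\<Prod>\<eta>\<in>U n. [:-\<eta>,1:]) = (\<Sum>\<eta>\<in>U n. degree [:-\<eta>,(1::complex):])"
    by (rule degree_prod_eq_sum_degree) auto
  also have "\<dots> = n" using U_card[OF assms] by simp
  finally show "degree (\<Prod>\<eta>\<in>U n. [:-\<eta>,1:]) = degree (monom (1::complex) n - 1)"
    using assms by (simp add: monom_minus_one)
  show "lead_coeff (\<Prod>\<eta>\<in>U n. [:-\<eta>,1:]) = 1" by (simp add: lead_coeff_prod)
  show "lead_coeff (monom (1::complex) n - 1) = 1"
    using assms by (simp add: monom_minus_one)
qed

lemma prod_U: "n > 0 \<Longrightarrow> (\<Prod>\<eta>\<in>U n. x - \<eta>) = x ^ n - 1"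
proof -
  assume n: "n > 0"
  have "poly (\<Prod>\<eta>\<in>U n. [:-\<eta>,1:]) x = poly (monom 1 n - 1) x" using prod_U_poly[OF n] by simp
  then show ?thesis by (simp add: poly_prod poly_monom)
qed

lemma prod_U_scaled:
  assumes "n > 0"
  shows "(\<Prod>\<eta>\<in>U n. x - c * \<eta>) = x ^ n - c ^ n"
proof (cases "c = 0")
  case True then show ?thesis using U_card[OF assms] assms by simp
next
  case False
  have "(\<Prod>\<eta>\<in>U n. x - c * \<eta>) = (\<Prod>\<eta>\<in>U n. c * (x / c - \<eta>))"
    using False by (intro prod.cong) (auto simp: field_simps)
  also have "\<dots> = c ^ n * (\<Prod>\<eta>\<in>U n. (x / c - \<eta>))"
    by (simp add: prod.distrib U_card[OF assms])
  also have "\<dots> = c ^ n * ((x/c)^n - 1)" by (simp add: prod_U[OF assms])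
  also have "\<dots> = x ^ n - c ^ n" using False by (simp add: field_simps power_divide)
  finally show ?thesis .
qed

lemma prod_U_norm:
  assumes "n > 0"
  shows "(\<Prod>\<eta>\<in>U n. cmod (x - c * \<eta>)) = cmod (x ^ n - c ^ n)"
proof -
  have "(\<Prod>\<eta>\<in>U n. cmod (x - c * \<eta>)) = cmod (\<Prod>\<eta>\<in>U n. x - c * \<eta>)"
    by (rule prod_norm)
  then show ?thesis by (simp add: prod_U_scaled[OF assms])
qed

lemma U_norm: "z \<in> U n \<Longrightarrow> n > 0 \<Longrightarrow> cmod z = 1"
proof -
  assume "z \<in> U n" "n > 0"
  then have "cmod z ^ n = 1 ^ n" by (simp add: U_def norm_power[symmetric])
  then show ?thesis using \<open>n > 0\<close> power_eq_imp_eq_base[of "cmod z" n 1] by simp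
qed

lemma prod_U_minus_pt:
  assumes n: "n > 0" and z: "\<zeta> \<in> U n"
  shows "(\<Prod>\<eta>\<in>U n - {\<zeta>}. cmod (\<zeta> - \<eta>)) = n"
proof -
  define P' where "P' = (\<Prod>\<eta>\<in>U n - {\<zeta>}. [:-\<eta>,1:])"
  define S where "S = (\<Sum>i<n. [:\<zeta>:] ^ (n - Suc i) * [:0,1:] ^ i)"
  have "[:-\<zeta>,1:] * P' = (\<Prod>\<eta>\<in>U n. [:-\<eta>,1:])"
    unfolding P'_def using U_finite[OF n] z by (simp add: prod.remove)
  also have "\<dots> = monom 1 n - 1" by (rule prod_U_poly[OF n])
  also have "\<dots> = [:0,1:] ^ n - [:\<zeta>:] ^ n"
    using z by (simp add: U_def monom_altdef poly_const_pow one_pCons)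
  also have "\<dots> = ([:0,1:] - [:\<zeta>:]) * S" unfolding S_def by (rule power_diff_sumr2)
  also have "[:0,1:] - [:\<zeta>:] = [:-\<zeta>,1:]" by simp
  finally have "[:-\<zeta>,1:] * P' = [:-\<zeta>,1:] * S" .
  then have "P' = S" by (subst (asm) mult_left_cancel) auto
  then have "poly P' \<zeta> = poly S \<zeta>" by simp
  also have "\<dots> = (\<Sum>i<n. \<zeta> ^ (n - 1))"
    unfolding S_def by (simp add: poly_sum poly_power power_add[symmetric])
  also have "\<dots> = of_nat n * \<zeta> ^ (n - 1)" by simp
  finally have "poly P' \<zeta> = of_nat n * \<zeta> ^ (n - 1)" .
  moreover have "poly P' \<zeta> = (\<Prod>\<eta>\<in>U n - {\<zeta>}. \<zeta> - \<eta>)" unfolding P'_def by (simp add: poly_prod)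
  ultimately have "cmod (\<Prod>\<eta>\<in>U n - {\<zeta>}. \<zeta> - \<eta>) = n"
    using U_norm[OF z n] by (simp add: norm_mult norm_power)
  then show ?thesis by (simp add: prod_norm)
qed

lemma prod_pow_fiber:
  fixes f :: "complex \<Rightarrow> real"
  assumes q: "q = k * p" and k: "k > 0" and p: "p > 0"
  shows "(\<Prod>\<rho>\<in>U q. f (\<rho> ^ k)) = (\<Prod>\<sigma>\<in>U p. f \<sigma> ^ k)"
proof -
  have q0: "q > 0" using q k p by simp
  have "(\<Prod>\<rho>\<in>U q. f (\<rho> ^ k)) = (\<Prod>\<sigma>\<in>U p. \<Prod>\<rho>\<in>{\<rho>. \<rho> \<in> U q \<and> \<rho> ^ k = \<sigma>}. f (\<rho> ^ k))"
    by (rule prod.group[symmetric], rule U_finite[OF q0], rule U_finite[OF p])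
      (auto simp: U_def q power_mult)
  also have "\<dots> = (\<Prod>\<sigma>\<in>U p. f \<sigma> ^ k)"
  proof (rule prod.cong[OF refl])
    fix \<sigma> assume s: "\<sigma> \<in> U p"
    have e: "{\<rho>. \<rho> \<in> U q \<and> \<rho> ^ k = \<sigma>} = {\<rho>. \<rho> ^ k = \<sigma>}"
      using s by (auto simp: U_def q power_mult)
    have "\<sigma> \<noteq> 0" using U_nz[OF s p] .
    then have "card {\<rho>. \<rho> ^ k = \<sigma>} = k" using k by (rule card_nth_roots)
    then show "(\<Prod>\<rho>\<in>{\<rho>. \<rho> \<in> U q \<and> \<rho> ^ k = \<sigma>}. f (\<rho> ^ k)) = f \<sigma> ^ k"
      unfolding e by simp
  qed
  finally show ?thesis .
qed

lemma prod_pow_fiber_norm: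
  assumes q: "q = k * p" and k: "k > 0" and p: "p > 0"
  shows "(\<Prod>\<rho>\<in>U q. cmod (a * \<rho> ^ k - b)) = cmod (a ^ p - b ^ p) ^ k"
proof -
  have "(\<Prod>\<rho>\<in>U q. cmod (a * \<rho> ^ k - b)) = (\<Prod>\<sigma>\<in>U p. cmod (a * \<sigma> - b) ^ k)"
    by (rule prod_pow_fiber[OF assms, of "\<lambda>s. cmod (a * s - b)"])
  also have "\<dots> = (\<Prod>\<sigma>\<in>U p. cmod (b - a * \<sigma>)) ^ k"
    by (simp add: prod_power_distrib norm_minus_commute)
  also have "\<dots> = cmod (a ^ p - b ^ p) ^ k"
    by (simp add: prod_U_norm[OF p] norm_minus_commute)
  finally show ?thesis .
qed

definition simr :: "complex \<Rightarrow> complex \<Rightarrow> bool" where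
  "simr a b \<longleftrightarrow> (\<forall>k. a ^ k = 1 \<longleftrightarrow> b ^ k = 1)"

definition SP :: "nat \<Rightarrow> (complex \<times> complex) set" where
  "SP n = {(a,b). a \<in> U n \<and> b \<in> U n \<and> \<not> simr a b}"

definition Fp :: "nat \<Rightarrow> real" where
  "Fp n = (\<Prod>x\<in>SP n. cmod (fst x - snd x))"

lemma SP_finite: "n > 0 \<Longrightarrow> finite (SP n)"
  by (rule finite_subset[of _ "U n \<times> U n"]) (auto simp: SP_def U_finite)

lemma pow_dvd_one: "(z::complex) ^ d = 1 \<Longrightarrow> d dvd k \<Longrightarrow> z ^ k = 1"
  by (auto elim!: dvdE simp: power_mult)

lemma pow_coprime_one:
  fixes x :: complex
  assumes "coprime c m" "x ^ m = 1" "x ^ (c * k) = 1"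
  shows "x ^ k = 1"
proof -
  have "x ^ gcd (c * k) m = 1" using assms by (intro pow_gcd_one)
  moreover have "gcd (c * k) m = gcd k m" using assms(1)
    by (intro gcd_mult_left_left_cancel) (simp add: coprime_commute)
  ultimately have "x ^ gcd k m = 1" by simp
  then show ?thesis by (rule pow_dvd_one) simp
qed

lemma pow_bij:
  assumes m: "m > 0" and c: "coprime c m"
  shows "bij_betw (\<lambda>x. x ^ c) (U m) (U m)"
    and "x \<in> U m \<Longrightarrow> y \<in> U m \<Longrightarrow> simr (x ^ c) (y ^ c) \<longleftrightarrow> simr x y"
proof -
  have key: "x \<in> U m \<Longrightarrow> (x ^ c) ^ k = 1 \<longleftrightarrow> x ^ k = 1" for x k
  proof
    assume "(x ^ c) ^ k = 1" "x \<in> U m"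
    then show "x ^ k = 1" using pow_coprime_one[OF c, of x k] by (simp add: U_def power_mult)
  next
    assume "x ^ k = 1"
    then have "(x ^ k) ^ c = 1" by simp
    then show "(x ^ c) ^ k = 1" by (simp add: power_mult[symmetric] mult.commute)
  qed
  show "x \<in> U m \<Longrightarrow> y \<in> U m \<Longrightarrow> simr (x ^ c) (y ^ c) \<longleftrightarrow> simr x y"
    unfolding simr_def using key by auto
  have inj: "inj_on (\<lambda>x. x ^ c) (U m)"
  proof (rule inj_onI)
    fix x y assume xy: "x \<in> U m" "y \<in> U m" "x ^ c = y ^ c"
    have y0: "y \<noteq> 0" using U_nz[OF xy(2) m] .
    have "(x / y) ^ c = 1" "(x / y) ^ m = 1" using xy y0 by (auto simp: power_divide U_def)
    then have "(x / y) ^ gcd c m = 1" by (rule pow_gcd_one)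
    then show "x = y" using c y0 by simp
  qed
  have sub: "(\<lambda>x. x ^ c) ` U m \<subseteq> U m" using key by (auto simp: U_def)
  have "card ((\<lambda>x. x ^ c) ` U m) = card (U m)" using inj by (rule card_image)
  then have "(\<lambda>x. x ^ c) ` U m = U m" using sub U_finite[OF m] by (intro card_subset_eq) auto
  then show "bij_betw (\<lambda>x. x ^ c) (U m) (U m)" using inj by (simp add: bij_betw_def)
qed

lemma Fp_pow:
  assumes m: "m > 0" and c: "coprime c m"
  shows "(\<Prod>x\<in>SP m. cmod (fst x ^ c - snd x ^ c)) = Fp m"
proof -
  have b: "bij_betw (\<lambda>x. x ^ c) (U m) (U m)" by (rule pow_bij(1)[OF m c])
  have "bij_betw (\<lambda>(x,y). (x ^ c, y ^ c)) (SP m) (SP m)"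
  proof -
    have "bij_betw (\<lambda>(x,y). (x ^ c, y ^ c)) (U m \<times> U m) (U m \<times> U m)"
      using bij_betw_map_prod[OF b b] by (simp add: map_prod_def)
    then have i: "inj_on (\<lambda>(x,y). (x ^ c, y ^ c)) (U m \<times> U m)" and
      o: "(\<lambda>(x,y). (x ^ c, y ^ c)) ` (U m \<times> U m) = U m \<times> U m" by (auto simp: bij_betw_def)
    show ?thesis unfolding bij_betw_def
    proof
      show "inj_on (\<lambda>(x,y). (x ^ c, y ^ c)) (SP m)"
        by (rule inj_on_subset[OF i]) (auto simp: SP_def)
      show "(\<lambda>(x,y). (x ^ c, y ^ c)) ` SP m = SP m"
      proof
        show "(\<lambda>(x,y). (x ^ c, y ^ c)) ` SP m \<subseteq> SP m"
          using pow_bij(2)[OF m c] b by (auto simp: SP_def bij_betw_def)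
        show "SP m \<subseteq> (\<lambda>(x,y). (x ^ c, y ^ c)) ` SP m"
        proof
          fix z assume z: "z \<in> SP m"
          then have "z \<in> (\<lambda>(x,y). (x ^ c, y ^ c)) ` (U m \<times> U m)" using o by (auto simp: SP_def)
          then obtain x y where xy: "x \<in> U m" "y \<in> U m" "z = (x ^ c, y ^ c)" by auto
          then have "\<not> simr x y" using z pow_bij(2)[OF m c] by (auto simp: SP_def)
          then show "z \<in> (\<lambda>(x,y). (x ^ c, y ^ c)) ` SP m" using xy by (auto simp: SP_def)
        qed
      qed
    qed
  qed
  then have "(\<Prod>x\<in>SP m. (\<lambda>x. cmod (fst x - snd x)) ((\<lambda>(x,y). (x ^ c, y ^ c)) x)) =
      (\<Prod>x\<in>SP m. cmod (fst x - snd x))"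
    by (rule prod.reindex_bij_betw)
  then show ?thesis unfolding Fp_def by (simp add: case_prod_beta)
qed

lemma SP_neq: "x \<in> SP m \<Longrightarrow> fst x \<noteq> snd x"
  unfolding SP_def simr_def by auto

lemma Fp_pos: "Fp m > 0"
  unfolding Fp_def by (rule prod_pos) (use SP_neq in auto)

lemma pair_formula:
  assumes k: "k > 0" and p: "p > 0" and q: "q = k * p"
  shows "(\<Prod>r\<in>U q - U k. \<Prod>r'\<in>U q - U k. cmod (x*r - y*r')) * cmod (x^q - y^q)^k =
         cmod (x^q - y^q)^(q - k) * cmod (x^k - y^k)^k"
proof -
  have q0: "q > 0" using k p q by simp
  have sub: "U k \<subseteq> U q" using q by (intro U_subset) simp
  define P where "P = U q - U k"
  have cP: "card P = q - k" unfolding P_def using sub U_finite[OF k] U_card[OF k] U_card[OF q0]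
    by (simp add: card_Diff_subset)
  have split: "(\<Prod>r\<in>U q. g r) = (\<Prod>r\<in>P. g r) * (\<Prod>r\<in>U k. g r)" for g :: "complex \<Rightarrow> real"
    unfolding P_def using sub U_finite[OF q0] by (rule prod.subset_diff)
  define Y where "Y = cmod (x^q - y^q)"
  define Z where "Z = cmod (x^k - y^k)"
  define X where "X = (\<Prod>r\<in>P. cmod (x^k * r^k - y^k))"
  define AA where "AA = (\<Prod>r\<in>P. \<Prod>r'\<in>P. cmod (x*r - y*r'))"
  have A: "(\<Prod>r'\<in>P. cmod (x*r - y*r')) * cmod (x^k * r^k - y^k) = Y" if r: "r \<in> U q" for r
  proof -
    have "(\<Prod>r'\<in>U q. cmod (x*r - y*r')) = cmod ((x*r)^q - y^q)" by (rule prod_U_norm[OF q0])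
    also have "\<dots> = Y" using r by (simp add: U_def power_mult_distrib Y_def)
    finally have 1: "(\<Prod>r'\<in>U q. cmod (x*r - y*r')) = Y" .
    have 2: "(\<Prod>r'\<in>U k. cmod (x*r - y*r')) = cmod (x^k * r^k - y^k)"
      by (simp add: prod_U_norm[OF k] power_mult_distrib)
    show ?thesis using 1 2 split[of "\<lambda>r'. cmod (x*r - y*r')"] by simp
  qed
  have "AA * X = (\<Prod>r\<in>P. (\<Prod>r'\<in>P. cmod (x*r - y*r')) * cmod (x^k * r^k - y^k))"
    unfolding AA_def X_def by (simp add: prod.distrib)
  also have "\<dots> = (\<Prod>r\<in>P. Y)" using A by (intro prod.cong) (auto simp: P_def)
  also have "\<dots> = Y ^ (q - k)" using cP by simp
  finally have AX: "AA * X = Y ^ (q - k)" .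
  have "(\<Prod>r\<in>U q. cmod (x^k * r^k - y^k)) = cmod ((x^k)^p - (y^k)^p) ^ k"
    by (rule prod_pow_fiber_norm[OF q k p])
  also have "\<dots> = Y ^ k" by (simp add: Y_def q power_mult)
  finally have B1: "(\<Prod>r\<in>U q. cmod (x^k * r^k - y^k)) = Y ^ k" .
  have B2: "(\<Prod>r\<in>U k. cmod (x^k * r^k - y^k)) = Z ^ k"
  proof -
    have "(\<Prod>r\<in>U k. cmod (x^k * r^k - y^k)) = (\<Prod>r\<in>U k. Z)"
      by (intro prod.cong) (auto simp: U_def Z_def)
    then show ?thesis using U_card[OF k] by simp
  qed
  have XZ: "X * Z ^ k = Y ^ k" using B1 B2 split[of "\<lambda>r. cmod (x^k * r^k - y^k)"]
    by (simp add: X_def)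
  have "AA * Y ^ k = Y ^ (q - k) * Z ^ k"
    by (metis AX XZ mult.assoc)
  then show ?thesis by (simp add: AA_def P_def Y_def Z_def)
qed

lemma cross_prod:
  assumes n': "n' > 0" and p0: "p > 0" and n: "n = n' * p" and z: "z \<in> U n'"
  shows "(\<Prod>b\<in>U n - U n'. cmod (z - b)) = real p"
proof -
  have n0: "n > 0" using n n' p0 by simp
  have sub: "U n' \<subseteq> U n" using n by (intro U_subset) simp
  have e: "U n - {z} = (U n' - {z}) \<union> (U n - U n')" using sub z by auto
  have "real n = (\<Prod>b\<in>U n - {z}. cmod (z - b))" using prod_U_minus_pt[OF n0] z sub by auto
  also have "\<dots> = (\<Prod>b\<in>U n' - {z}. cmod (z - b)) * (\<Prod>b\<in>U n - U n'. cmod (z - b))"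
    unfolding e by (rule prod.union_disjoint) (use U_finite[OF n'] U_finite[OF n0] in auto)
  also have "(\<Prod>b\<in>U n' - {z}. cmod (z - b)) = real n'" using prod_U_minus_pt[OF n' z] .
  finally show ?thesis using n n' by simp
qed

lemma P_pow:
  assumes p: "prime p" and a: "a \<ge> 1" and r: "r \<in> U (p^a) - U (p^(a-1))"
  shows "r ^ j = 1 \<longleftrightarrow> p^a dvd j"
proof
  assume rj: "r ^ j = 1"
  have rq: "r ^ (p^a) = 1" using r by (simp add: U_def)
  have g: "r ^ gcd j (p^a) = 1" using pow_gcd_one[OF rj rq] .
  have "gcd j (p^a) dvd p^a" by (rule gcd_dvd2)
  then obtain i where i: "i \<le> a" "gcd j (p^a) = p^i"
    using divides_primepow_nat[OF p] by blast
  have ri: "r ^ (p^i) = 1" using g i(2) by simp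
  have "i = a"
  proof (rule ccontr)
    assume "i \<noteq> a"
    then have "i \<le> a - 1" using i(1) by linarith
    then have "p^i dvd p^(a-1)" by (rule le_imp_power_dvd)
    then have "r ^ (p^(a-1)) = 1" using pow_dvd_one[OF ri] by blast
    then show False using r by (simp add: U_def)
  qed
  then have "gcd j (p^a) = p^a" using i(2) by simp
  then show "p^a dvd j" using gcd_dvd1[of j "p^a"] by simp
next
  assume "p^a dvd j"
  then show "r ^ j = 1" using r pow_dvd_one[of r "p^a" j] by (simp add: U_def)
qed

lemma mult_pow_one:
  assumes p: "prime p" and a: "a \<ge> 1" and pm: "coprime (p^a) m"
    and x: "x \<in> U m" and r: "r \<in> U (p^a) - U (p^(a-1))"
  shows "(x * r) ^ j = 1 \<longleftrightarrow> x ^ j = 1 \<and> p^a dvd j"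
proof
  assume h: "(x * r) ^ j = 1"
  then have "((x * r) ^ j) ^ m = 1" by simp
  then have "(x ^ m) ^ j * r ^ (j * m) = 1" by (simp add: power_mult_distrib power_mult[symmetric] mult.commute)
  then have "r ^ (j * m) = 1" using x by (simp add: U_def)
  then have "p^a dvd j * m" using P_pow[OF p a r] by simp
  then have d: "p^a dvd j" using pm by (simp add: coprime_dvd_mult_left_iff)
  then have "r ^ j = 1" using P_pow[OF p a r] by simp
  then show "x ^ j = 1 \<and> p^a dvd j" using h d by (simp add: power_mult_distrib)
next
  assume "x ^ j = 1 \<and> p^a dvd j"
  then show "(x * r) ^ j = 1" using P_pow[OF p a r] by (simp add: power_mult_distrib)
qed

lemma simr_transfer:
  assumes p: "prime p" and a: "a \<ge> 1" and pm: "coprime (p^a) m"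
    and x: "x \<in> U m" and r: "r \<in> U (p^a) - U (p^(a-1))"
    and x': "x' \<in> U m" and r': "r' \<in> U (p^a) - U (p^(a-1))"
  shows "simr (x * r) (x' * r') \<longleftrightarrow> simr x x'"
proof
  assume h: "simr (x * r) (x' * r')"
  show "simr x x'" unfolding simr_def
  proof
    fix j
    have "(x * r) ^ (p^a * j) = 1 \<longleftrightarrow> (x' * r') ^ (p^a * j) = 1" using h by (simp add: simr_def)
    then have "x ^ (p^a * j) = 1 \<longleftrightarrow> x' ^ (p^a * j) = 1"
      using mult_pow_one[OF p a pm x r] mult_pow_one[OF p a pm x' r'] by simp
    moreover have "y ^ (p^a * j) = 1 \<longleftrightarrow> y ^ j = 1" if y: "y \<in> U m" for y :: complex
    proof
      assume "y ^ (p^a * j) = 1" then show "y ^ j = 1" using pow_coprime_one[OF pm, of y j] y by (simp add: U_def)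
    next
      assume "y ^ j = 1" then show "y ^ (p^a * j) = 1" by (simp add: power_mult mult.commute[of "p^a"])
    qed
    ultimately show "x ^ j = 1 \<longleftrightarrow> x' ^ j = 1" using x x' by simp
  qed
next
  assume "simr x x'"
  then show "simr (x * r) (x' * r')"
    unfolding simr_def using mult_pow_one[OF p a pm x r] mult_pow_one[OF p a pm x' r'] by simp
qed

lemma mult_bij:
  assumes p: "prime p" and a: "a \<ge> 1" and m: "m > 0" and pm: "coprime (p^a) m"
  shows "bij_betw (\<lambda>(x,r). x*r) (U m \<times> (U (p^a) - U (p^(a-1)))) (U (p^a*m) - U (p^(a-1)*m))"
proof -
  define q k where "q = p^a" and "k = p^(a-1)"
  have p1: "p > 1" using prime_gt_1_nat[OF p] .
  have q: "q = k * p" using a unfolding q_def k_def by (cases a) auto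
  have k0: "k > 0" using p1 by (simp add: k_def)
  have q0: "q > 0" using p1 by (simp add: q_def)
  have kq: "k < q" using q k0 p1 by simp
  define P where "P = U q - U k"
  have subk: "U k \<subseteq> U q" using q by (intro U_subset) simp
  have cP: "card P = q - k" unfolding P_def using subk U_finite[OF k0] U_card[OF k0] U_card[OF q0]
    by (simp add: card_Diff_subset)
  have subn: "U (k*m) \<subseteq> U (q*m)" using q by (intro U_subset) simp
  have cN: "card (U (q*m) - U (k*m)) = q*m - k*m"
    using subn U_finite[of "k*m"] U_card[of "k*m"] U_card[of "q*m"] k0 q0 m
    by (simp add: card_Diff_subset)
  have inj: "inj_on (\<lambda>(x,r). x*r) (U m \<times> P)"
  proof (rule inj_onI, clarify)
    fix x r x' r' assume h: "x \<in> U m" "r \<in> P" "x' \<in> U m" "r' \<in> P" "x * r = x' * r'"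
    have x'0: "x' \<noteq> 0" using U_nz[OF h(3) m] .
    have r0: "r \<noteq> 0" using h(2) q0 by (auto simp: P_def U_def power_0_left)
    define z where "z = x / x'"
    have z1: "z = r' / r" using h(5) x'0 r0 unfolding z_def by (simp add: field_simps)
    have "z ^ m = 1" using h(1,3) x'0 by (simp add: z_def power_divide U_def)
    moreover have "z ^ q = 1" using h(2,4) r0 by (simp add: z1 power_divide U_def P_def)
    ultimately have "z ^ gcd m q = 1" by (rule pow_gcd_one)
    moreover have "gcd m q = 1" using pm by (simp add: q_def coprime_iff_gcd_eq_1 gcd.commute)
    ultimately have "z = 1" by simp
    then show "x = x' \<and> r = r'" using x'0 r0 h(5) unfolding z_def by auto
  qed
  have im: "(\<lambda>(x,r). x*r) ` (U m \<times> P) \<subseteq> U (q*m) - U (k*m)"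
  proof (rule image_subsetI, clarify)
    fix x r assume h: "x \<in> U m" "r \<in> P"
    have "(x * r) ^ (q*m) = (x^m)^q * (r^q)^m"
      by (simp add: power_mult_distrib power_mult[symmetric] mult.commute)
    then have A: "x * r \<in> U (q*m)" using h by (simp add: U_def P_def)
    have B: "x * r \<notin> U (k*m)"
    proof
      assume "x * r \<in> U (k*m)"
      then have "(x * r) ^ (k*m) = 1" by (simp add: U_def)
      then have "q dvd k * m" using mult_pow_one[OF p a pm h(1), of r "k*m"] h(2)
        by (simp add: P_def q_def k_def)
      then have "q dvd k" using pm by (simp add: q_def coprime_dvd_mult_left_iff)
      then show False using kq k0 by (simp add: nat_dvd_not_less)
    qed
    show "x * r \<in> U (q*m) - U (k*m)" using A B by simp
  qed
  have "card ((\<lambda>(x,r). x*r) ` (U m \<times> P)) = card (U m \<times> P)" using inj by (rule card_image)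
  also have "\<dots> = m * (q - k)" using U_card[OF m] cP by (simp add: card_cartesian_product)
  also have "\<dots> = card (U (q*m) - U (k*m))" using cN by (simp add: algebra_simps diff_mult_distrib)
  finally have "(\<lambda>(x,r). x*r) ` (U m \<times> P) = U (q*m) - U (k*m)"
    using im U_finite[of "q*m"] q0 m by (intro card_subset_eq) auto
  then show ?thesis using inj unfolding bij_betw_def P_def q_def k_def by simp
qed

lemma F_step:
  assumes p: "prime p" and a: "a \<ge> 1" and m: "m > 0" and pm: "\<not> p dvd m"
  shows "Fp (p^a * m) = Fp (p^(a-1) * m) * real p ^ (2 * (p^(a-1) * m)) * Fp m ^ (p^a - p^(a-1))"
proof -
  define q k n n' where "q = p^a" and "k = p^(a-1)" and "n = p^a * m" and "n' = p^(a-1) * m"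
  have p1: "p > 1" using prime_gt_1_nat[OF p] .
  have q: "q = k * p" using a unfolding q_def k_def by (cases a) auto
  have k0: "k > 0" using p1 by (simp add: k_def)
  have q0: "q > 0" using p1 by (simp add: q_def)
  have n0: "n > 0" "n' > 0" using q0 k0 m by (simp_all add: n_def n'_def q_def k_def)
  have nn: "n = n' * p" using q unfolding n_def n'_def q_def[symmetric] k_def[symmetric] by simp
  have cop: "coprime (p^a) m" using prime_imp_coprime[OF p pm] by simp
  have copq: "coprime q m" "coprime k m" using cop unfolding q_def k_def
    by (auto simp: coprime_power_left_iff)
  define N where "N = U n - U n'"
  define P where "P = U q - U k"
  have sub: "U n' \<subseteq> U n" using nn by (intro U_subset) simp
  define S4 where "S4 = {(x,y). x \<in> N \<and> y \<in> N \<and> \<not> simr x y}"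
  have nsim: "\<not> simr x y" "\<not> simr y x" if "x \<in> U n'" "y \<in> N" for x y
    using that unfolding simr_def N_def U_def by blast+
  have dec: "SP n = ((SP n' \<union> (U n' \<times> N)) \<union> (N \<times> U n')) \<union> S4"
  proof
    show "SP n \<subseteq> ((SP n' \<union> (U n' \<times> N)) \<union> (N \<times> U n')) \<union> S4"
      by (auto simp: SP_def S4_def N_def)
    show "((SP n' \<union> (U n' \<times> N)) \<union> (N \<times> U n')) \<union> S4 \<subseteq> SP n"
      using sub nsim by (auto simp: SP_def S4_def N_def)
  qed
  define f where "f = (\<lambda>x::complex\<times>complex. cmod (fst x - snd x))"
  have finn: "finite (U n)" "finite (U n')" using U_finite n0 by auto
  have finN: "finite N" using finn by (simp add: N_def)
  have fin4: "finite S4" by (rule finite_subset[of _ "N \<times> N"]) (auto simp: S4_def finN)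
  have finSP: "finite (SP n')" using SP_finite[OF n0(2)] .
  have "Fp n = prod f (SP n') * prod f (U n' \<times> N) * prod f (N \<times> U n') * prod f S4"
    unfolding Fp_def f_def[symmetric] dec
    using finn finN fin4 finSP
    by (subst prod.union_disjoint, fastforce, fastforce, force simp: S4_def N_def SP_def)+
       (simp add: mult.assoc)
  moreover have c2: "prod f (U n' \<times> N) = real p ^ n'"
  proof -
    have "prod f (U n' \<times> N) = (\<Prod>x\<in>U n'. \<Prod>y\<in>N. cmod (x - y))"
      unfolding f_def by (simp add: prod.cartesian_product case_prod_beta)
    also have "\<dots> = (\<Prod>x\<in>U n'. real p)"
      using cross_prod[OF n0(2) _ nn] p1 by (intro prod.cong) (auto simp: N_def)
    also have "\<dots> = real p ^ n'" using U_card[OF n0(2)] by simp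
    finally show ?thesis .
  qed
  moreover have c3: "prod f (N \<times> U n') = real p ^ n'"
  proof -
    have "prod f (N \<times> U n') = (\<Prod>y\<in>N. \<Prod>x\<in>U n'. cmod (y - x))"
      unfolding f_def by (simp add: prod.cartesian_product case_prod_beta)
    also have "\<dots> = (\<Prod>x\<in>U n'. \<Prod>y\<in>N. cmod (x - y))"
      by (subst prod.swap) (simp add: norm_minus_commute)
    also have "\<dots> = (\<Prod>x\<in>U n'. real p)"
      using cross_prod[OF n0(2) _ nn] p1 by (intro prod.cong) (auto simp: N_def)
    also have "\<dots> = real p ^ n'" using U_card[OF n0(2)] by simp
    finally show ?thesis .
  qed
  moreover have c4: "prod f S4 = Fp m ^ (q - k)"
  proof -
    have mb: "bij_betw (\<lambda>(x,r). x*r) (U m \<times> P) N"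
      using mult_bij[OF p a m cop] unfolding P_def N_def q_def k_def n_def n'_def .
    have mbinj: "inj_on (\<lambda>(x,r). x*r) (U m \<times> P)" and mbimg: "(\<lambda>(x,r). x*r) ` (U m \<times> P) = N"
      using mb unfolding bij_betw_def by auto
    have mbi: "x = y \<and> r = s" if "x * r = y * s" "x \<in> U m" "y \<in> U m" "r \<in> P" "s \<in> P" for x y r s
    proof -
      have "(x, r) = (y, s)" using inj_onD[OF mbinj, of "(x,r)" "(y,s)"] that by simp
      then show ?thesis by simp
    qed
    have mbim: "x * r \<in> N" if "x \<in> U m" "r \<in> P" for x r
    proof -
      have "(\<lambda>(x,r). x*r) (x, r) \<in> (\<lambda>(x,r). x*r) ` (U m \<times> P)" using that by (intro imageI) simp
      then show ?thesis using mbimg by simp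
    qed
    have mbon: "\<exists>x r. x \<in> U m \<and> r \<in> P \<and> u = x * r" if "u \<in> N" for u
    proof -
      have "u \<in> (\<lambda>(x,r). x*r) ` (U m \<times> P)" using that mbimg by simp
      then show ?thesis by auto
    qed
    have tr: "simr (x * r) (x' * r') \<longleftrightarrow> simr x x'"
      if "x \<in> U m" "r \<in> P" "x' \<in> U m" "r' \<in> P" for x r x' r'
      using simr_transfer[OF p a cop, of x r x' r'] that unfolding P_def q_def k_def by simp
    define g where "g = (\<lambda>((x::complex,x'::complex),(r::complex,r'::complex)). (x*r, x'*r'))"
    have bg: "bij_betw g (SP m \<times> (P \<times> P)) S4"
      unfolding bij_betw_def
    proof
      show "inj_on g (SP m \<times> (P \<times> P))"
      proof (rule inj_onI)
        fix uu vv assume h0: "uu \<in> SP m \<times> P \<times> P" "vv \<in> SP m \<times> P \<times> P" "g uu = g vv"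
        obtain x x' r r' where uu: "uu = ((x, x'), r, r')" by (metis prod.collapse)
        obtain y y' s s' where vv: "vv = ((y, y'), s, s')" by (metis prod.collapse)
        have e: "x * r = y * s" "x' * r' = y' * s'" using h0(3) by (simp_all add: g_def uu vv)
        have u: "x \<in> U m" "x' \<in> U m" "y \<in> U m" "y' \<in> U m" "r \<in> P" "r' \<in> P" "s \<in> P" "s' \<in> P"
          using h0(1,2) by (simp_all add: SP_def uu vv)
        show "uu = vv"
          using mbi[OF e(1) u(1) u(3) u(5) u(7)] mbi[OF e(2) u(2) u(4) u(6) u(8)] by (simp add: uu vv)
      qed
      show "g ` (SP m \<times> (P \<times> P)) = S4"
      proof
        show "g ` (SP m \<times> (P \<times> P)) \<subseteq> S4"
        proof (rule image_subsetI)
          fix uu assume h: "uu \<in> SP m \<times> P \<times> P"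
          obtain x x' r r' where uu: "uu = ((x, x'), r, r')" by (metis prod.collapse)
          have u: "x \<in> U m" "x' \<in> U m" "r \<in> P" "r' \<in> P" "\<not> simr x x'"
            using h by (simp_all add: SP_def uu)
          have "\<not> simr (x * r) (x' * r')" using tr[OF u(1) u(3) u(2) u(4)] u(5) by simp
          then show "g uu \<in> S4"
            using mbim[OF u(1) u(3)] mbim[OF u(2) u(4)] by (simp add: g_def S4_def uu)
        qed
        show "S4 \<subseteq> g ` (SP m \<times> (P \<times> P))"
        proof (clarify)
          fix u v assume uv: "(u, v) \<in> S4"
          then obtain x r x' r' where h: "x \<in> U m" "r \<in> P" "u = x * r" "x' \<in> U m" "r' \<in> P" "v = x' * r'"
            using mbon unfolding S4_def by blast
          have "\<not> simr x x'" using uv h tr by (auto simp: S4_def)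
          then have "((x,x'),(r,r')) \<in> SP m \<times> (P \<times> P)" using h by (auto simp: SP_def)
          moreover have "g ((x,x'),(r,r')) = (u, v)" using h by (simp add: g_def)
          ultimately show "(u, v) \<in> g ` (SP m \<times> (P \<times> P))" by (metis image_eqI)
        qed
      qed
    qed
    have "prod f S4 = prod (f \<circ> g) (SP m \<times> (P \<times> P))"
      using prod.reindex_bij_betw[OF bg, of f] by (simp add: comp_def)
    also have "\<dots> = (\<Prod>y\<in>SP m. \<Prod>r\<in>P. \<Prod>r'\<in>P. cmod (fst y * r - snd y * r'))"
      unfolding f_def g_def by (simp add: prod.cartesian_product case_prod_beta)
    finally have e4: "prod f S4 = (\<Prod>y\<in>SP m. \<Prod>r\<in>P. \<Prod>r'\<in>P. cmod (fst y * r - snd y * r'))" .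
    have "prod f S4 * (\<Prod>y\<in>SP m. cmod (fst y ^ q - snd y ^ q)) ^ k =
        (\<Prod>y\<in>SP m. (\<Prod>r\<in>P. \<Prod>r'\<in>P. cmod (fst y * r - snd y * r')) * cmod (fst y ^ q - snd y ^ q) ^ k)"
      unfolding e4 by (simp add: prod.distrib prod_power_distrib)
    also have "\<dots> = (\<Prod>y\<in>SP m. cmod (fst y ^ q - snd y ^ q) ^ (q - k) * cmod (fst y ^ k - snd y ^ k) ^ k)"
      unfolding P_def by (intro prod.cong refl pair_formula[OF k0 _ q]) (use p1 in simp)
    also have "\<dots> = (\<Prod>y\<in>SP m. cmod (fst y ^ q - snd y ^ q)) ^ (q - k) *
        (\<Prod>y\<in>SP m. cmod (fst y ^ k - snd y ^ k)) ^ k"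
      by (simp add: prod.distrib prod_power_distrib)
    finally have "prod f S4 * Fp m ^ k = Fp m ^ (q - k) * Fp m ^ k"
      using Fp_pow[OF m copq(1)] Fp_pow[OF m copq(2)] by simp
    then show ?thesis using Fp_pos[of m] by simp
  qed
  moreover have "prod f (SP n') = Fp n'" by (simp add: f_def Fp_def)
  ultimately have "Fp n = Fp n' * real p ^ n' * real p ^ n' * Fp m ^ (q - k)" by simp
  then show ?thesis unfolding n_def n'_def q_def k_def by (simp add: power_add[symmetric] mult_2)
qed

definition ee :: "nat \<Rightarrow> nat \<Rightarrow> nat" where
  "ee r x = (x div r ^ multiplicity r x) * (\<Sum>j<multiplicity r x. r ^ j)"

definition TT :: "nat \<Rightarrow> nat" where
  "TT x = (\<Prod>r\<in>prime_factors x. r ^ ee r x)"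

lemma TT_ext:
  assumes x: "x > 0" and S: "finite S" "prime_factors x \<subseteq> S" "\<forall>r\<in>S. prime r"
  shows "TT x = (\<Prod>r\<in>S. r ^ ee r x)"
  unfolding TT_def
proof (rule prod.mono_neutral_left[OF S(1) S(2)])
  show "\<forall>i\<in>S - prime_factors x. i ^ ee i x = 1"
  proof
    fix r assume r: "r \<in> S - prime_factors x"
    then have "\<not> r dvd x" using S(3) x by (auto simp: in_prime_factors_iff)
    then have "multiplicity r x = 0" by (rule not_dvd_imp_multiplicity_0)
    then show "r ^ ee r x = 1" by (simp add: ee_def)
  qed
qed

lemma mult_other:
  fixes r p m :: nat
  assumes "prime r" "prime p" "r \<noteq> p" "m > 0"
  shows "multiplicity r (p ^ j * m) = multiplicity r m"
proof -
  have p0: "p \<noteq> 0" using assms(2) by auto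
  have "multiplicity r (p ^ j * m) = multiplicity r (p ^ j) + multiplicity r m"
    using prime_elem_multiplicity_mult_distrib[of r "p^j" m] assms p0 by simp
  also have "multiplicity r (p ^ j) = j * multiplicity r p"
    using assms p0 by (intro prime_elem_multiplicity_power_distrib) auto
  also have "multiplicity r p = 0" using assms by (intro prime_multiplicity_other) auto
  finally show ?thesis by simp
qed

lemma mult_same:
  fixes p m :: nat
  assumes "prime p" "\<not> p dvd m" "m > 0"
  shows "multiplicity p (p ^ j * m) = j"
proof -
  have p0: "p \<noteq> 0" using assms(1) by auto
  have "multiplicity p (p ^ j * m) = multiplicity p (p ^ j) + multiplicity p m"
    using prime_elem_multiplicity_mult_distrib[of p "p^j" m] assms p0 by simp
  also have "multiplicity p m = 0" using assms(2) by (rule not_dvd_imp_multiplicity_0)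
  finally show ?thesis using assms(1) by simp
qed

lemma ee_step:
  fixes p a m r :: nat
  assumes p: "prime p" and a: "a \<ge> 1" and m: "m > 0" and pm: "\<not> p dvd m" and r: "prime r"
  shows "ee r (p^a * m) = ee r (p^(a-1) * m) + (p^a - p^(a-1)) * ee r m
           + (if r = p then p^(a-1) * m else 0)"
proof (cases "r = p")
  case True
  have "multiplicity p m = 0" using pm by (rule not_dvd_imp_multiplicity_0)
  then have e0: "ee p m = 0" by (simp add: ee_def)
  have "ee p (p^a * m) = m * (\<Sum>j<a. p^j)"
    using mult_same[OF p pm m, of a] p by (simp add: ee_def)
  moreover have "ee p (p^(a-1) * m) = m * (\<Sum>j<a-1. p^j)"
    using mult_same[OF p pm m, of "a-1"] p by (simp add: ee_def)
  moreover have "(\<Sum>j<a. p^j) = (\<Sum>j<a-1. p^j) + p^(a-1)"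
    using a by (cases a) auto
  ultimately show ?thesis using True e0 by (simp add: algebra_simps)
next
  case False
  define b where "b = multiplicity r m"
  have mb: "multiplicity r (p^a * m) = b" "multiplicity r (p^(a-1) * m) = b"
    using mult_other[OF r p False m] by (simp_all add: b_def)
  obtain t where t: "m = r ^ b * t" using multiplicity_dvd[of r m] unfolding b_def by (auto elim: dvdE)
  have r0: "r ^ b > 0" using r by (simp add: prime_gt_0_nat)
  have "p^a * m = r^b * (p^a * t)" "p^(a-1) * m = r^b * (p^(a-1) * t)" using t by (simp_all add: mult_ac)
  then have d1: "p^a * m div r^b = p^a * t" and d2: "p^(a-1) * m div r^b = p^(a-1) * t"
    using r0 by (metis nonzero_mult_div_cancel_left not_gr0)+
  have d3: "m div r^b = t" using t r0 by simp
  have le: "p^(a-1) \<le> p^a" using prime_gt_1_nat[OF p] by (intro power_increasing) auto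
  obtain d where dd: "p^a = p^(a-1) + d" using le le_iff_add by blast
  define S where "S = (\<Sum>j<b. r ^ j)"
  have "ee r (p^a * m) = p^a * t * S" by (simp add: ee_def mb d1 S_def)
  moreover have "ee r (p^(a-1) * m) = p^(a-1) * t * S" unfolding ee_def mb d2 S_def ..
  moreover have "ee r m = t * S" by (simp add: ee_def b_def[symmetric] d3 S_def)
  moreover have "p^a - p^(a-1) = d" using dd by simp
  ultimately show ?thesis using False dd by (simp add: algebra_simps)
qed

lemma Fp_1: "Fp 1 = 1"
proof -
  have "U 1 = {1}" by (auto simp: U_def)
  then have "SP 1 = {}" by (auto simp: SP_def simr_def)
  then show ?thesis by (simp add: Fp_def)
qed

lemma TT_step:
  fixes p a m :: nat
  assumes p: "prime p" and a: "a \<ge> 1" and m: "m > 0" and pm: "\<not> p dvd m"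
  shows "TT (p^a * m) = TT (p^(a-1) * m) * p ^ (p^(a-1) * m) * TT m ^ (p^a - p^(a-1))"
proof -
  define n n' c where "n = p^a * m" and "n' = p^(a-1) * m" and "c = p^a - p^(a-1)"
  have p0: "p > 0" using prime_gt_0_nat[OF p] .
  have n0: "n > 0" "n' > 0" using p0 m by (simp_all add: n_def n'_def)
  define S where "S = prime_factors n"
  have fS: "finite S" "\<forall>r\<in>S. prime r" by (auto simp: S_def)
  have dn': "n' dvd n" using a unfolding n_def n'_def by (intro mult_dvd_mono le_imp_power_dvd) auto
  have dm: "m dvd n" by (simp add: n_def)
  have sub: "prime_factors n' \<subseteq> S" "prime_factors m \<subseteq> S"
    using dn' dm n0 m by (auto simp: S_def in_prime_factors_iff intro: dvd_trans)
  have pS: "p \<in> S" using p a n0 by (auto simp: S_def in_prime_factors_iff n_def intro!: dvd_mult2)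
  have "TT n = (\<Prod>r\<in>S. r ^ ee r n)" unfolding TT_def S_def ..
  also have "\<dots> = (\<Prod>r\<in>S. r ^ ee r n' * (r ^ ee r m) ^ c * (if r = p then r ^ n' else 1))"
  proof (rule prod.cong[OF refl])
    fix r assume r: "r \<in> S"
    have "ee r n = ee r n' + c * ee r m + (if r = p then n' else 0)"
      using ee_step[OF p a m pm, of r] fS r unfolding n_def n'_def c_def by simp
    then show "r ^ ee r n = r ^ ee r n' * (r ^ ee r m) ^ c * (if r = p then r ^ n' else 1)"
      by (simp add: power_add power_mult[symmetric] mult.commute)
  qed
  also have "\<dots> = (\<Prod>r\<in>S. r ^ ee r n') * (\<Prod>r\<in>S. r ^ ee r m) ^ c * (\<Prod>r\<in>S. if r = p then r ^ n' else 1)"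
    by (simp add: prod.distrib prod_power_distrib)
  also have "(\<Prod>r\<in>S. if r = p then r ^ n' else 1) = p ^ n'"
    using fS(1) pS by (simp add: prod.delta)
  also have "(\<Prod>r\<in>S. r ^ ee r n') = TT n'" using TT_ext[OF n0(2) fS(1) sub(1) fS(2)] by simp
  also have "(\<Prod>r\<in>S. r ^ ee r m) = TT m" using TT_ext[OF m fS(1) sub(2) fS(2)] by simp
  finally show ?thesis unfolding n_def n'_def c_def by (simp add: mult_ac)
qed

theorem Fp_formula: "n > 0 \<Longrightarrow> Fp n = real (TT n) ^ 2"
proof (induction n rule: less_induct)
  case (less n)
  show ?case
  proof (cases "n = 1")
    case True then show ?thesis using Fp_1 by (simp add: TT_def)
  next
    case False
    obtain p where p: "prime p" "p dvd n" using prime_factor_nat[OF False] by blast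
    define a where "a = multiplicity p n"
    define m where "m = n div p ^ a"
    have p1: "p > 1" using prime_gt_1_nat[OF p(1)] .
    have a: "a \<ge> 1" using p less.prems prime_multiplicity_gt_zero_iff[of p n] by (simp add: a_def)
    have nm: "n = p^a * m" using multiplicity_dvd[of p n] by (simp add: a_def m_def)
    have pm: "\<not> p dvd m" unfolding m_def a_def by (rule multiplicity_decompose) (use less.prems p in auto)
    have m: "m > 0" using nm less.prems by (cases m) auto
    have pa: "p^a > 1" using p1 a by (metis one_less_power not_one_le_zero le0 neq0_conv le_trans less_one nat_less_le)
    have mlt: "m < n" using nm pa m by simp
    have "p^(a-1) < p^a" using p1 a by (intro power_strict_increasing) auto
    then have n'lt: "p^(a-1) * m < n" using nm m by simp
    have "Fp n = Fp (p^(a-1) * m) * real p ^ (2 * (p^(a-1) * m)) * Fp m ^ (p^a - p^(a-1))"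
      using F_step[OF p(1) a m pm] nm by simp
    also have "\<dots> = real (TT (p^(a-1) * m)) ^ 2 * real p ^ (2 * (p^(a-1) * m)) * (real (TT m) ^ 2) ^ (p^a - p^(a-1))"
      using less.IH[OF n'lt] less.IH[OF mlt] m p1 by simp
    also have "\<dots> = real (TT (p^(a-1) * m) * p ^ (p^(a-1) * m) * TT m ^ (p^a - p^(a-1))) ^ 2"
      by (simp add: power_mult_distrib power_mult[symmetric] mult.commute)
    also have "\<dots> = real (TT n) ^ 2" using TT_step[OF p(1) a m pm] nm by simp
    finally show ?thesis .
  qed
qed

definition vdm :: "nat \<Rightarrow> (nat \<Rightarrow> 'a::idom) \<Rightarrow> 'a mat" where
  "vdm n x = mat n n (\<lambda>(i,j). x i ^ j)"

definition VP :: "nat \<Rightarrow> (nat \<Rightarrow> 'a::idom) \<Rightarrow> 'a" where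
  "VP n x = (\<Prod>i<n. \<Prod>j<i. x i - x j)"

lemma VP_Suc: "VP (Suc n) x = (\<Prod>i<n. x (Suc i) - x 0) * VP n (\<lambda>i. x (Suc i))"
proof -
  have "VP (Suc n) x = (\<Prod>i<n. \<Prod>j<Suc i. x (Suc i) - x j)"
    unfolding VP_def by (subst prod.lessThan_Suc_shift) simp
  also have "\<dots> = (\<Prod>i<n. (x (Suc i) - x 0) * (\<Prod>j<i. x (Suc i) - x (Suc j)))"
    by (subst prod.lessThan_Suc_shift) simp
  also have "\<dots> = (\<Prod>i<n. x (Suc i) - x 0) * VP n (\<lambda>i. x (Suc i))"
    unfolding VP_def by (simp add: prod.distrib)
  finally show ?thesis .
qed

lemma det_diag_like:
  fixes d :: "nat \<Rightarrow> 'a::comm_ring_1"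
  shows "det (mat n n (\<lambda>(i,j). if i = j then d i else 0)) = (\<Prod>i<n. d i)"
proof -
  have "upper_triangular (mat n n (\<lambda>(i,j). if i = j then d i else 0))"
    unfolding upper_triangular_def by auto
  then have "det (mat n n (\<lambda>(i,j). if i = j then d i else 0)) =
      prod_list (diag_mat (mat n n (\<lambda>(i,j). if i = j then d i else 0)))"
    by (rule det_upper_triangular) auto
  also have "\<dots> = (\<Prod>i<n. d i)" by (simp add: prod_list_diag_prod atLeast0LessThan)
  finally show ?thesis .
qed

lemma det_vdm: "det (vdm n x) = VP n x"
proof (induction n arbitrary: x)
  case 0
  then show ?case by (simp add: vdm_def VP_def)
next
  case (Suc n)
  define U where "U = mat (Suc n) (Suc n) (\<lambda>(i,j). if i = j then 1 else if j = Suc i then - x 0 else 0)"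
  have Uc: "U \<in> carrier_mat (Suc n) (Suc n)" by (simp add: U_def)
  have Vc: "vdm (Suc n) x \<in> carrier_mat (Suc n) (Suc n)" by (simp add: vdm_def)
  have "upper_triangular U" unfolding upper_triangular_def U_def by auto
  then have "det U = prod_list (diag_mat U)" using Uc by (rule det_upper_triangular)
  also have "\<dots> = 1" by (simp add: prod_list_diag_prod U_def)
  finally have dU: "det U = 1" .
  define M where "M = mat n n (\<lambda>(i,j). x (Suc i) ^ j * (x (Suc i) - x 0))"
  define C where "C = four_block_mat (mat 1 1 (\<lambda>_. 1)) (0\<^sub>m 1 n) (mat n 1 (\<lambda>_. 1)) M"
  have VU: "vdm (Suc n) x * U = C"
  proof (rule eq_matI)
    show "dim_row (vdm (Suc n) x * U) = dim_row C" "dim_col (vdm (Suc n) x * U) = dim_col C"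
      by (simp_all add: C_def M_def vdm_def U_def)
    fix i j assume ij: "i < dim_row C" "j < dim_col C"
    then have i: "i < Suc n" and j: "j < Suc n" by (simp_all add: C_def M_def)
    have "(vdm (Suc n) x * U) $$ (i,j) = (\<Sum>k<Suc n. x i ^ k * U $$ (k, j))"
      using i j by (simp add: vdm_def U_def scalar_prod_def atLeast0LessThan)
    also have "\<dots> = (\<Sum>k<Suc n. (if k = j then x i ^ k else 0) + (if j = Suc k then - x 0 * x i ^ k else 0))"
      using j by (intro sum.cong refl) (auto simp: U_def)
    also have "\<dots> = x i ^ j + (if j = 0 then 0 else - x 0 * x i ^ (j - 1))"
      using j by (cases j) (auto simp: sum.distrib)
    also have "\<dots> = C $$ (i,j)"
      using i j by (cases i; cases j) (auto simp: C_def M_def algebra_simps)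
    finally show "(vdm (Suc n) x * U) $$ (i,j) = C $$ (i,j)" .
  qed
  define D where "D = mat n n (\<lambda>(i,j). if i = j then x (Suc i) - x 0 else 0)"
  have MD: "M = D * vdm n (\<lambda>i. x (Suc i))"
  proof (rule eq_matI)
    show "dim_row M = dim_row (D * vdm n (\<lambda>i. x (Suc i)))" "dim_col M = dim_col (D * vdm n (\<lambda>i. x (Suc i)))"
      by (simp_all add: M_def D_def vdm_def)
    fix i j assume "i < dim_row (D * vdm n (\<lambda>i. x (Suc i)))" "j < dim_col (D * vdm n (\<lambda>i. x (Suc i)))"
    then have i: "i < n" and j: "j < n" by (simp_all add: D_def vdm_def)
    have "(D * vdm n (\<lambda>i. x (Suc i))) $$ (i,j) = (\<Sum>k\<in>{0..<n}. (if i = k then x (Suc i) - x 0 else 0) * x (Suc k) ^ j)"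
      using i j by (simp add: D_def vdm_def scalar_prod_def)
    also have "\<dots> = (\<Sum>k\<in>{0..<n}. if k = i then (x (Suc i) - x 0) * x (Suc i) ^ j else 0)"
      by (intro sum.cong) auto
    also have "\<dots> = (x (Suc i) - x 0) * x (Suc i) ^ j"
      using i by simp
    finally show "M $$ (i,j) = (D * vdm n (\<lambda>i. x (Suc i))) $$ (i,j)"
      using i j by (simp add: M_def mult.commute)
  qed
  have "det (vdm (Suc n) x) = det (vdm (Suc n) x * U)" using det_mult[OF Vc Uc] dU by simp
  also have "\<dots> = det C" using VU by simp
  also have "\<dots> = det (mat 1 1 (\<lambda>_. 1)) * det M"
    unfolding C_def by (rule det_four_block_mat_upper_right_zero) (auto simp: M_def)
  also have "det (mat 1 1 (\<lambda>_. 1::'a)) = 1"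
  proof -
    have "mat 1 1 (\<lambda>_. 1::'a) = mat 1 1 (\<lambda>(i,j). if i = j then 1 else 0)"
      by (rule eq_matI) auto
    then show ?thesis using det_diag_like[of 1 "\<lambda>_. 1::'a"] by simp
  qed
  also have "det M = det D * det (vdm n (\<lambda>i. x (Suc i)))"
    unfolding MD by (rule det_mult) (auto simp: D_def vdm_def)
  also have "det D = (\<Prod>i<n. x (Suc i) - x 0)" unfolding D_def by (rule det_diag_like)
  also have "det (vdm n (\<lambda>i. x (Suc i))) = VP n (\<lambda>i. x (Suc i))" by (rule Suc.IH)
  finally show ?case by (simp add: VP_Suc)
qed

definition om :: "nat \<Rightarrow> complex" where "om d = cis (2 * pi / real d)"

lemma om_pow: "om d ^ k = cis (2 * pi * real k / real d)"
  by (simp add: om_def DeMoivre algebra_simps)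

lemma om_pow_d: "d > 0 \<Longrightarrow> om d ^ d = 1"
  by (simp add: om_pow)

lemma om_pow_mod: "d > 0 \<Longrightarrow> om d ^ k = om d ^ (k mod d)"
proof -
  assume d: "d > 0"
  have "om d ^ k = om d ^ (d * (k div d) + k mod d)" by simp
  also have "\<dots> = (om d ^ d) ^ (k div d) * om d ^ (k mod d)" by (simp only: power_add power_mult)
  finally show ?thesis using om_pow_d[OF d] by simp
qed

lemma om_inj: "d > 0 \<Longrightarrow> a < d \<Longrightarrow> b < d \<Longrightarrow> om d ^ a = om d ^ b \<Longrightarrow> a = b"
proof -
  assume d: "d > 0" and ab: "a < d" "b < d" and e: "om d ^ a = om d ^ b"
  have "inj_on (\<lambda>k. cis (2 * pi * real k / real d)) {..<d}"
    using bij_betw_roots_unity[OF d] by (simp add: bij_betw_def)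
  then show "a = b" using e ab by (auto simp: om_pow dest: inj_onD)
qed

lemma om_eq_iff: "d > 0 \<Longrightarrow> om d ^ a = om d ^ b \<longleftrightarrow> a mod d = b mod d"
proof -
  assume d: "d > 0"
  show ?thesis
  proof
    assume "om d ^ a = om d ^ b"
    then have "om d ^ (a mod d) = om d ^ (b mod d)" using om_pow_mod[OF d, of a] om_pow_mod[OF d, of b] by simp
    then show "a mod d = b mod d" using om_inj[OF d] d by simp
  next
    assume "a mod d = b mod d"
    then show "om d ^ a = om d ^ b" using om_pow_mod[OF d, of a] om_pow_mod[OF d, of b] by simp
  qed
qed

lemma om_one_iff: "d > 0 \<Longrightarrow> om d ^ a = 1 \<longleftrightarrow> d dvd a"
  using om_eq_iff[of d a 0] by (simp add: dvd_eq_mod_eq_0)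

lemma om_ord: "d > 0 \<Longrightarrow> coprime j d \<Longrightarrow> (om d ^ j) ^ e = 1 \<longleftrightarrow> d dvd e"
  by (simp add: power_mult[symmetric] om_one_iff coprime_dvd_mult_right_iff coprime_commute)

definition Tset :: "nat \<Rightarrow> nat set" where "Tset d = {j \<in> {1..d}. coprime j d}"
definition cs :: "nat \<Rightarrow> nat list" where "cs d = sorted_list_of_set (Tset d)"
definition pt :: "nat \<times> nat \<Rightarrow> complex" where "pt x = om (fst x) ^ (cs (fst x) ! snd x)"

lemma Tset_tot: "Tset d = totatives d"
  by (auto simp: Tset_def totatives_def)

lemma cs_props: "set (cs d) = Tset d" "distinct (cs d)" "length (cs d) = totient d"
proof -
  have f: "finite (Tset d)" by (simp add: Tset_def)
  show "set (cs d) = Tset d" "distinct (cs d)" using f by (simp_all add: cs_def)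
  show "length (cs d) = totient d" using f by (simp add: cs_def totient_def Tset_tot)
qed

lemma cs_mem: "i < totient d \<Longrightarrow> cs d ! i \<in> Tset d"
  using cs_props nth_mem by metis

lemma pt_ord: "d > 0 \<Longrightarrow> i < totient d \<Longrightarrow> pt (d, i) ^ e = 1 \<longleftrightarrow> d dvd e"
  using cs_mem[of i d] by (simp add: pt_def om_ord Tset_def)

lemma Tset_mod_inj: "j \<in> Tset d \<Longrightarrow> j' \<in> Tset d \<Longrightarrow> j mod d = j' mod d \<Longrightarrow> j = j'"
proof -
  assume j: "j \<in> Tset d" and j': "j' \<in> Tset d" and e: "j mod d = j' mod d"
  have jj: "1 \<le> j" "j \<le> d" "1 \<le> j'" "j' \<le> d" using j j' by (auto simp: Tset_def)
  have m: "x mod d = (if x = d then 0 else x)" if "1 \<le> x" "x \<le> d" for x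
    using that by auto
  show "j = j'" using e m[OF jj(1,2)] m[OF jj(3,4)] jj by (auto split: if_splits)
qed

lemma pt_inj:
  assumes "d > 0" "d' > 0" "i < totient d" "i' < totient d'" "pt (d, i) = pt (d', i')"
  shows "d = d' \<and> i = i'"
proof -
  have de: "d dvd e \<longleftrightarrow> d' dvd e" for e using pt_ord[OF assms(1,3), of e] pt_ord[OF assms(2,4), of e] assms(5) by simp
  have "d dvd d'" "d' dvd d" using de[of d'] de[of d] by simp_all
  then have dd: "d = d'" by (rule dvd_antisym)
  then have "om d ^ (cs d ! i) = om d ^ (cs d ! i')" using assms(5) by (simp add: pt_def)
  then have "cs d ! i mod d = cs d ! i' mod d" using om_eq_iff[OF assms(1)] by simp
  then have "cs d ! i = cs d ! i'" using Tset_mod_inj cs_mem assms(3,4) dd by blast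
  then have "i = i'" using cs_props(2,3)[of d] assms(3,4) dd nth_eq_iff_index_eq by metis
  then show ?thesis using dd by simp
qed

lemma cyc_c_prod:
  assumes "d > 0"
  shows "cyclotomic_complex d = (\<Prod>i<totient d. [:- pt (d, i), 1:])"
proof -
  have "cyclotomic_complex d = (\<Prod>j\<in>Tset d. [:- (om d ^ j), 1:])"
    unfolding cyclotomic_complex_def Tset_def by (simp add: om_pow)
  also have "\<dots> = (\<Prod>i<totient d. [:- (om d ^ (cs d ! i)), 1:])"
    by (rule prod.reindex_bij_betw[symmetric, of "(!) (cs d)"], rule bij_betw_nth)
       (use cs_props in auto)
  finally show ?thesis by (simp add: pt_def)
qed

lemma rl_blocks_set: "set (concat (map (\<lambda>d. map (\<lambda>i. (d, i)) [0..<k d]) ds)) = {(d,i). d \<in> set ds \<and> i < k d}"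
  by auto

lemma rl_blocks_distinct: "distinct ds \<Longrightarrow> distinct (concat (map (\<lambda>d. map (\<lambda>i. (d, i)) [0..<k d]) ds))"
  by (induction ds) (auto simp: distinct_map inj_on_def)

lemma rl_blocks_length: "distinct ds \<Longrightarrow> length (concat (map (\<lambda>d. map (\<lambda>i. (d, i)) [0..<k d]) ds)) = (\<Sum>d\<in>set ds. k d)"
  by (induction ds) auto

lemma rl_set: "n > 0 \<Longrightarrow> set (row_labels n) = {(d,i). d dvd n \<and> i < totient d}"
proof -
  assume "n > 0"
  then have "finite {d. d dvd n}" by simp
  then show ?thesis unfolding row_labels_def rl_blocks_set by simp
qed

lemma rl_distinct: "n > 0 \<Longrightarrow> distinct (row_labels n)"
  unfolding row_labels_def by (intro rl_blocks_distinct) simp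

lemma rl_length: "n > 0 \<Longrightarrow> length (row_labels n) = n"
proof -
  assume n: "n > 0"
  then have f: "finite {d. d dvd n}" by simp
  have "length (row_labels n) = (\<Sum>d\<in>{d. d dvd n}. totient d)"
    unfolding row_labels_def using f by (subst rl_blocks_length) simp_all
  also have "\<dots> = n" by (rule totient_divisor_sum)
  finally show ?thesis .
qed

lemma rl_pos: "n > 0 \<Longrightarrow> x \<in> set (row_labels n) \<Longrightarrow> fst x > 0 \<and> fst x dvd n \<and> snd x < totient (fst x)"
proof -
  assume n: "n > 0" and x: "x \<in> set (row_labels n)"
  obtain d i where xd: "x = (d, i)" by (cases x)
  have h: "d dvd n" "i < totient d" using x rl_set[OF n] xd by auto
  have "d \<noteq> 0" using h(1) n by (metis dvd_0_left_iff not_less0)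
  then show ?thesis using h xd by simp
qed

lemma pt_inj_rl: "n > 0 \<Longrightarrow> inj_on pt (set (row_labels n))"
proof -
  assume n: "n > 0"
  show ?thesis
  proof (rule inj_onI)
    fix x y assume x: "x \<in> set (row_labels n)" and y: "y \<in> set (row_labels n)" and e: "pt x = pt y"
    obtain d i d' i' where xy: "x = (d, i)" "y = (d', i')" by (cases x, cases y) auto
    show "x = y" using pt_inj[of d d' i i'] rl_pos[OF n x] rl_pos[OF n y] e xy by simp
  qed
qed

lemma pt_U: "n > 0 \<Longrightarrow> x \<in> set (row_labels n) \<Longrightarrow> pt x \<in> U n"
  using rl_pos[of n x] pt_ord[of "fst x" "snd x" n] by (simp add: U_def)

lemma pt_image: "n > 0 \<Longrightarrow> pt ` set (row_labels n) = U n"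
proof -
  assume n: "n > 0"
  have "card (pt ` set (row_labels n)) = card (set (row_labels n))"
    using pt_inj_rl[OF n] by (rule card_image)
  also have "\<dots> = n" using rl_distinct[OF n] rl_length[OF n] by (simp add: distinct_card)
  finally have c: "card (pt ` set (row_labels n)) = card (U n)" using U_card[OF n] by simp
  show ?thesis using pt_U[OF n] c U_finite[OF n] by (intro card_subset_eq) auto
qed

lemma pt_simr: "n > 0 \<Longrightarrow> x \<in> set (row_labels n) \<Longrightarrow> y \<in> set (row_labels n) \<Longrightarrow>
   simr (pt x) (pt y) \<longleftrightarrow> fst x = fst y"
proof -
  assume n: "n > 0" and x: "x \<in> set (row_labels n)" and y: "y \<in> set (row_labels n)"
  obtain d i d' i' where xy: "x = (d, i)" "y = (d', i')" by (cases x, cases y) auto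
  have h: "d > 0" "i < totient d" "d' > 0" "i' < totient d'" using rl_pos[OF n x] rl_pos[OF n y] xy by auto
  have "simr (pt x) (pt y) \<longleftrightarrow> (\<forall>e. d dvd e \<longleftrightarrow> d' dvd e)"
    unfolding simr_def xy by (simp only: pt_ord[OF h(1,2)] pt_ord[OF h(3,4)])
  also have "\<dots> \<longleftrightarrow> d = d'"
  proof
    assume de: "\<forall>e. d dvd e \<longleftrightarrow> d' dvd e"
    have "d dvd d'" "d' dvd d" using de[rule_format, of d'] de[rule_format, of d] by simp_all
    then show "d = d'" by (rule dvd_antisym)
  qed simp
  finally show ?thesis using xy by simp
qed

lemma monic_pdiv:
  fixes f g :: "int poly"
  assumes g: "lead_coeff g = 1"
  shows "\<exists>q. f = g * q + pseudo_mod f g" "pseudo_mod f g = 0 \<or> degree (pseudo_mod f g) < degree g"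
proof -
  have g0: "g \<noteq> 0" using g by auto
  obtain q r where qr: "pseudo_divmod f g = (q, r)" by (metis surj_pair)
  have r: "pseudo_mod f g = r" using qr by (simp add: pseudo_mod_def)
  have "Polynomial.smult (coeff g (degree g) ^ (Suc (degree f) - degree g)) f = g * q + r"
    using pseudo_divmod(1)[OF g0 qr] .
  then have "f = g * q + r" using g by simp
  then show "\<exists>q. f = g * q + pseudo_mod f g" using r by (intro exI[of _ q]) simp
  show "pseudo_mod f g = 0 \<or> degree (pseudo_mod f g) < degree g" using pseudo_divmod(2)[OF g0 qr] r by simp
qed

lemma X_prod:
  assumes n: "n > 0"
  shows "monom 1 n - 1 = (\<Prod>d\<in>{d. d dvd n}. cyclotomic_complex d)"
proof -
  have f: "finite {d. d dvd n}" using n by simp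
  have "monom 1 n - 1 = (\<Prod>\<zeta>\<in>U n. [:-\<zeta>,1:])" using prod_U_poly[OF n] by simp
  also have "\<dots> = (\<Prod>\<zeta>\<in>pt ` set (row_labels n). [:-\<zeta>,1:])" using pt_image[OF n] by simp
  also have "\<dots> = (\<Prod>x\<in>set (row_labels n). [:- pt x,1:])"
    using pt_inj_rl[OF n] by (simp add: prod.reindex)
  also have "set (row_labels n) = Sigma {d. d dvd n} (\<lambda>d. {..<totient d})"
    using rl_set[OF n] by auto
  also have "(\<Prod>x\<in>Sigma {d. d dvd n} (\<lambda>d. {..<totient d}). [:- pt x,1:]) =
      (\<Prod>d\<in>{d. d dvd n}. \<Prod>i<totient d. [:- pt (d,i),1:])"
    using f by (subst prod.Sigma) auto
  also have "\<dots> = (\<Prod>d\<in>{d. d dvd n}. cyclotomic_complex d)"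
  proof (rule prod.cong[OF refl])
    fix d assume "d \<in> {d. d dvd n}"
    then have "d > 0" using n by (auto intro!: Nat.gr0I)
    then show "(\<Prod>i<totient d. [:- pt (d,i),1:]) = cyclotomic_complex d" by (simp add: cyc_c_prod)
  qed
  finally show ?thesis .
qed

lemma cyc_c_monic:
  assumes "d > 0" shows "lead_coeff (cyclotomic_complex d) = 1" "degree (cyclotomic_complex d) = totient d"
proof -
  show "lead_coeff (cyclotomic_complex d) = 1" using assms by (simp add: cyc_c_prod lead_coeff_prod)
  have "degree (\<Prod>i<totient d. [:- pt (d,i),(1::complex):]) = (\<Sum>i<totient d. degree [:- pt (d,i),(1::complex):])"
    by (rule degree_prod_eq_sum_degree) auto
  then show "degree (cyclotomic_complex d) = totient d" using assms by (simp add: cyc_c_prod)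
qed

lemma of_int_poly_inj: "map_poly (of_int :: int \<Rightarrow> complex) p = map_poly of_int q \<Longrightarrow> p = q"
  by (metis of_int_poly_hom.eq_iff)

lemma cyc_int: "d > 0 \<Longrightarrow> map_poly of_int (cyclotomic d) = cyclotomic_complex d"
proof (induction d rule: less_induct)
  case (less d)
  define E where "E = {e. e dvd d \<and> e \<noteq> d}"
  have fE: "finite E" using less.prems by (simp add: E_def)
  have Epos: "e \<in> E \<Longrightarrow> e > 0 \<and> e < d" for e
    using less.prems by (auto simp: E_def intro!: Nat.gr0I dest: dvd_imp_le)
  define Q where "Q = (\<Prod>e\<in>E. cyclotomic e)"
  have Qc: "map_poly of_int Q = (\<Prod>e\<in>E. cyclotomic_complex e)"
    unfolding Q_def of_int_poly_hom.hom_prod using less.IH Epos by (intro prod.cong) auto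
  have lQc: "lead_coeff (map_poly (of_int :: int \<Rightarrow> complex) Q) = 1"
    unfolding Qc lead_coeff_prod using cyc_c_monic Epos by simp
  then have lQ: "lead_coeff Q = 1" by simp
  have dQ: "degree (map_poly (of_int :: int \<Rightarrow> complex) Q) = degree Q" by simp
  have X: "monom 1 d - 1 = cyclotomic_complex d * map_poly of_int Q"
  proof -
    have "{e. e dvd d} = insert d E" by (auto simp: E_def)
    then show ?thesis using X_prod[OF less.prems] fE by (simp add: Qc E_def)
  qed
  define r where "r = pseudo_mod (monom 1 d - 1) Q"
  obtain s where s: "monom 1 d - 1 = Q * s + r" using monic_pdiv(1)[OF lQ] unfolding r_def by blast
  have rdeg: "r = 0 \<or> degree r < degree Q" using monic_pdiv(2)[OF lQ] unfolding r_def .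
  have "map_poly (of_int :: int \<Rightarrow> complex) (monom 1 d - 1) = monom 1 d - 1" by (simp add: of_int_poly_hom.hom_minus)
  then have "monom 1 d - 1 = map_poly of_int Q * map_poly of_int s + (map_poly of_int r :: complex poly)"
    using s by (simp add: of_int_poly_hom.hom_add of_int_poly_hom.hom_mult)
  with X have eq: "map_poly of_int Q * (cyclotomic_complex d - map_poly of_int s) = (map_poly of_int r :: complex poly)"
    by (simp add: algebra_simps)
  have Q0: "map_poly (of_int :: int \<Rightarrow> complex) Q \<noteq> 0" using lQc by auto
  have ex: "cyclotomic_complex d = map_poly of_int s"
  proof (rule ccontr)
    assume ne: "cyclotomic_complex d \<noteq> map_poly of_int s"
    then have "map_poly of_int r \<noteq> (0 :: complex poly)" using eq Q0 by auto
    then have r0: "r \<noteq> 0" by auto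
    have "degree (map_poly (of_int :: int \<Rightarrow> complex) r) = degree (map_poly of_int Q * (cyclotomic_complex d - map_poly of_int s))"
      using eq by simp
    also have "\<dots> = degree Q + degree (cyclotomic_complex d - map_poly of_int s)"
      using Q0 ne by (subst degree_mult_eq) auto
    finally have "degree r \<ge> degree Q" by simp
    then show False using rdeg r0 by simp
  qed
  have "\<exists>!p. map_poly (of_int :: int \<Rightarrow> complex) p = cyclotomic_complex d"
    using ex of_int_poly_inj by metis
  then show ?case unfolding cyclotomic_def by (rule theI')
qed

lemma cyc_monic: "d > 0 \<Longrightarrow> lead_coeff (cyclotomic d) = 1 \<and> degree (cyclotomic d) = totient d"
proof -
  assume d: "d > 0"
  have "lead_coeff (map_poly (of_int :: int \<Rightarrow> complex) (cyclotomic d)) = 1"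
       "degree (map_poly (of_int :: int \<Rightarrow> complex) (cyclotomic d)) = totient d"
    using cyc_c_monic[OF d] cyc_int[OF d] by simp_all
  then show ?thesis by simp
qed

lemma poly_as_sum:
  fixes p :: "complex poly"
  assumes "p = 0 \<or> degree p < N"
  shows "poly p x = (\<Sum>i<N. coeff p i * x ^ i)"
proof (cases "p = 0")
  case True then show ?thesis by simp
next
  case False
  then have dN: "degree p < N" using assms by simp
  have "poly p x = (\<Sum>i\<le>degree p. coeff p i * x ^ i)" by (rule poly_altdef)
  also have "\<dots> = (\<Sum>i<N. coeff p i * x ^ i)"
    using dN by (intro sum.mono_neutral_left) (auto simp: coeff_eq_0)
  finally show ?thesis .
qed

lemma pmod_eval:
  assumes d: "d > 0" and i: "i < totient d"
  shows "(\<Sum>k<totient d. pt (d,i) ^ k * of_int (coeff (pseudo_mod (monom 1 j) (cyclotomic d)) k)) = pt (d,i) ^ j"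
proof -
  define r where "r = pseudo_mod (monom 1 j) (cyclotomic d)"
  have mon: "lead_coeff (cyclotomic d) = 1" "degree (cyclotomic d) = totient d" using cyc_monic[OF d] by auto
  obtain q where q: "monom 1 j = cyclotomic d * q + r" using monic_pdiv(1)[OF mon(1)] unfolding r_def by blast
  have rd: "r = 0 \<or> degree r < totient d" using monic_pdiv(2)[OF mon(1)] mon(2) unfolding r_def by simp
  have "map_poly (of_int :: int \<Rightarrow> complex) (monom 1 j) = cyclotomic_complex d * map_poly of_int q + map_poly of_int r"
    using q cyc_int[OF d] by (simp add: of_int_poly_hom.hom_add of_int_poly_hom.hom_mult)
  moreover have "map_poly (of_int :: int \<Rightarrow> complex) (monom 1 j) = monom 1 j" by simp
  ultimately have m: "(monom 1 j :: complex poly) = cyclotomic_complex d * map_poly of_int q + map_poly of_int r"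
    by simp
  have "poly (monom 1 j) (pt (d,i)) = poly (cyclotomic_complex d * map_poly of_int q + map_poly of_int r) (pt (d,i))"
    using m by (rule arg_cong)
  then have "poly (monom 1 j) (pt (d,i)) = poly (cyclotomic_complex d) (pt (d,i)) * poly (map_poly of_int q) (pt (d,i))
      + poly (map_poly (of_int :: int \<Rightarrow> complex) r) (pt (d,i))"
    by (simp only: poly_add poly_mult)
  moreover have "poly (cyclotomic_complex d) (pt (d,i)) = 0"
    using i by (simp add: cyc_c_prod[OF d] poly_prod) blast
  ultimately have e: "poly (map_poly (of_int :: int \<Rightarrow> complex) r) (pt (d,i)) = pt (d,i) ^ j"
    by (simp add: poly_monom)
  have "map_poly (of_int :: int \<Rightarrow> complex) r = 0 \<or> degree (map_poly (of_int :: int \<Rightarrow> complex) r) < totient d"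
    using rd by auto
  then have "poly (map_poly (of_int :: int \<Rightarrow> complex) r) (pt (d,i)) =
      (\<Sum>k<totient d. coeff (map_poly (of_int :: int \<Rightarrow> complex) r) k * pt (d,i) ^ k)"
    by (rule poly_as_sum)
  then show ?thesis using e unfolding r_def[symmetric] by (simp add: mult.commute)
qed

definition blk :: "(nat \<Rightarrow> nat) \<Rightarrow> nat list \<Rightarrow> (nat \<times> nat) list" where
  "blk k ds = concat (map (\<lambda>d. map (\<lambda>i. (d, i)) [0..<k d]) ds)"

definition BMat :: "(nat \<Rightarrow> nat) \<Rightarrow> nat list \<Rightarrow> (nat \<times> nat \<Rightarrow> nat \<Rightarrow> complex) \<Rightarrow> complex mat" where
  "BMat k ds h = mat (length (blk k ds)) (length (blk k ds))
     (\<lambda>(r,s). if fst (blk k ds ! r) = fst (blk k ds ! s) then h (blk k ds ! r) (snd (blk k ds ! s)) else 0)"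

lemma det_BMat: "distinct ds \<Longrightarrow> det (BMat k ds h) = (\<Prod>d\<leftarrow>ds. det (mat (k d) (k d) (\<lambda>(i,j). h (d,i) j)))"
proof (induction ds)
  case Nil
  then show ?case by (simp add: BMat_def blk_def)
next
  case (Cons d ds)
  define L' where "L' = blk k ds"
  define a where "a = k d"
  define N' where "N' = length L'"
  have L: "blk k (d # ds) = map (\<lambda>i. (d, i)) [0..<a] @ L'" by (simp add: blk_def L'_def a_def)
  have len: "length (blk k (d # ds)) = a + N'" by (simp add: L N'_def)
  have lo: "r < a \<Longrightarrow> blk k (d # ds) ! r = (d, r)" for r by (simp add: L nth_append)
  have hi: "r \<ge> a \<Longrightarrow> blk k (d # ds) ! r = L' ! (r - a)" for r by (simp add: L nth_append)
  have fstL': "t < N' \<Longrightarrow> fst (L' ! t) \<noteq> d" for t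
  proof -
    assume t: "t < N'"
    have "L' ! t \<in> set L'" using t by (simp add: N'_def)
    then have "fst (L' ! t) \<in> set ds" by (auto simp: L'_def blk_def)
    then show ?thesis using Cons.prems by auto
  qed
  define M0 where "M0 = mat a a (\<lambda>(i,j). h (d,i) j)"
  have eq: "BMat k (d # ds) h = four_block_mat M0 (0\<^sub>m a N') (0\<^sub>m N' a) (BMat k ds h)"
  proof (rule eq_matI)
    show "dim_row (BMat k (d # ds) h) = dim_row (four_block_mat M0 (0\<^sub>m a N') (0\<^sub>m N' a) (BMat k ds h))"
      "dim_col (BMat k (d # ds) h) = dim_col (four_block_mat M0 (0\<^sub>m a N') (0\<^sub>m N' a) (BMat k ds h))"
      by (simp_all add: BMat_def len M0_def N'_def L'_def)
    fix r s assume rs: "r < dim_row (four_block_mat M0 (0\<^sub>m a N') (0\<^sub>m N' a) (BMat k ds h))"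
      "s < dim_col (four_block_mat M0 (0\<^sub>m a N') (0\<^sub>m N' a) (BMat k ds h))"
    then have r: "r < a + N'" and s: "s < a + N'" by (simp_all add: BMat_def M0_def N'_def L'_def)
    show "BMat k (d # ds) h $$ (r, s) = four_block_mat M0 (0\<^sub>m a N') (0\<^sub>m N' a) (BMat k ds h) $$ (r, s)"
    proof (cases "r < a"; cases "s < a")
      assume "r < a" "s < a"
      then show ?thesis using r s by (simp add: BMat_def len lo M0_def N'_def L'_def)
    next
      assume h: "r < a" "\<not> s < a"
      then have "s - a < N'" using s by simp
      then have ne: "fst (L' ! (s - a)) \<noteq> d" by (rule fstL')
      have "BMat k (d # ds) h $$ (r, s) = 0" using h r s ne by (simp add: BMat_def len lo hi)
      then show ?thesis using h r s by (simp add: M0_def BMat_def N'_def L'_def)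
    next
      assume h: "\<not> r < a" "s < a"
      then have "r - a < N'" using r by simp
      then have ne: "fst (L' ! (r - a)) \<noteq> d" by (rule fstL')
      have "BMat k (d # ds) h $$ (r, s) = 0" using h r s ne by (simp add: BMat_def len lo hi)
      then show ?thesis using h r s by (simp add: M0_def BMat_def N'_def L'_def)
    next
      assume "\<not> r < a" "\<not> s < a"
      then show ?thesis using r s by (simp add: BMat_def len hi M0_def N'_def L'_def)
    qed
  qed
  have "det (BMat k (d # ds) h) = det M0 * det (BMat k ds h)"
    unfolding eq by (rule det_four_block_mat_lower_left_zero) (auto simp: M0_def BMat_def N'_def L'_def)
  then show ?case using Cons by (simp add: M0_def a_def)
qed

lemma rl_blk: "row_labels n = blk totient (sorted_list_of_set {d. d dvd n})"
  by (simp add: row_labels_def blk_def)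

lemma matrix_identity:
  assumes n: "n > 0"
  shows "BMat totient (sorted_list_of_set {d. d dvd n}) (\<lambda>x j. pt x ^ j) * map_mat of_int (A_mat n)
         = vdm n (\<lambda>r. pt (row_labels n ! r))"
    (is "?B * ?A = ?W")
proof -
  define L where "L = row_labels n"
  have lenL: "length L = n" using rl_length[OF n] by (simp add: L_def)
  have distL: "distinct L" using rl_distinct[OF n] by (simp add: L_def)
  have Bdef: "?B = mat n n (\<lambda>(r,s). if fst (L ! r) = fst (L ! s) then pt (L ! r) ^ snd (L ! s) else 0)"
    unfolding BMat_def rl_blk[symmetric] L_def[symmetric] lenL ..
  show ?thesis
  proof (rule eq_matI)
    show "dim_row (?B * ?A) = dim_row ?W" "dim_col (?B * ?A) = dim_col ?W"
      by (simp_all add: Bdef A_mat_def vdm_def)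
    fix r j assume "r < dim_row ?W" "j < dim_col ?W"
    then have r: "r < n" and j: "j < n" by (simp_all add: vdm_def)
    obtain d i0 where Lr: "L ! r = (d, i0)" by (cases "L ! r")
    have Lrmem: "L ! r \<in> set L" using r lenL by simp
    have d: "d > 0" "d dvd n" "i0 < totient d" using rl_pos[OF n, of "L ! r"] Lrmem Lr by (simp_all add: L_def)
    define c where "c = (\<lambda>x. of_int (coeff (pseudo_mod (monom 1 j) (cyclotomic (fst x))) (snd x)) :: complex)"
    define g where "g = (\<lambda>x. (if d = fst x then pt (d, i0) ^ snd x else 0) * c x)"
    have "(?B * ?A) $$ (r, j) = (\<Sum>s\<in>{0..<n}. ?B $$ (r, s) * ?A $$ (s, j))"
      using r j by (simp add: Bdef A_mat_def scalar_prod_def)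
    also have "\<dots> = (\<Sum>s<n. g (L ! s))"
      using r j by (intro sum.cong) (auto simp: Bdef A_mat_def L_def[symmetric] Lr g_def c_def split: prod.splits)
    also have "\<dots> = (\<Sum>x\<in>set L. g x)"
      using bij_betw_nth[OF distL refl refl] lenL by (simp add: sum.reindex_bij_betw)
    also have "\<dots> = (\<Sum>x\<in>{x\<in>set L. fst x = d}. pt (d, i0) ^ snd x * c x)"
    proof -
      have "(\<Sum>x\<in>set L. g x) = (\<Sum>x\<in>set L. if fst x = d then pt (d, i0) ^ snd x * c x else 0)"
        by (intro sum.cong) (auto simp: g_def)
      then show ?thesis by (simp add: sum.inter_filter)
    qed
    also have "{x\<in>set L. fst x = d} = Pair d ` {..<totient d}"
    proof
      show "{x\<in>set L. fst x = d} \<subseteq> Pair d ` {..<totient d}"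
      proof
        fix x assume x: "x \<in> {x\<in>set L. fst x = d}"
        then have "snd x < totient d" using rl_pos[OF n, of x] by (simp add: L_def)
        moreover have "x = Pair d (snd x)" using x by (cases x) simp
        ultimately show "x \<in> Pair d ` {..<totient d}" by blast
      qed
      show "Pair d ` {..<totient d} \<subseteq> {x\<in>set L. fst x = d}"
      proof
        fix x assume "x \<in> Pair d ` {..<totient d}"
        then obtain i where i: "i < totient d" "x = (d, i)" by auto
        have "(d, i) \<in> set L" unfolding L_def rl_set[OF n] using i d(2) by simp
        then show "x \<in> {x\<in>set L. fst x = d}" using i by simp
      qed
    qed
    also have "(\<Sum>x\<in>Pair d ` {..<totient d}. pt (d, i0) ^ snd x * c x) = (\<Sum>i<totient d. pt (d, i0) ^ i * c (d, i))"
      by (subst sum.reindex) (auto simp: inj_on_def)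
    also have "\<dots> = pt (d, i0) ^ j" unfolding c_def using pmod_eval[OF d(1) d(3)] by simp
    also have "\<dots> = ?W $$ (r, j)" using r j by (simp add: vdm_def L_def[symmetric] Lr)
    finally show "(?B * ?A) $$ (r, j) = ?W $$ (r, j)" .
  qed
qed

lemma det_identity:
  assumes n: "n > 0"
  shows "(\<Prod>d\<in>{d. d dvd n}. VP (totient d) (\<lambda>i. pt (d, i))) * of_int (det (A_mat n)) = VP n (\<lambda>r. pt (row_labels n ! r))"
proof -
  define ds where "ds = sorted_list_of_set {d. d dvd n}"
  have fin: "finite {d. d dvd n}" using n by simp
  have dds: "distinct ds" "set ds = {d. d dvd n}" using fin by (simp_all add: ds_def)
  define B where "B = BMat totient ds (\<lambda>x j. pt x ^ j)"
  have lenB: "length (blk totient ds) = n" using rl_length[OF n] by (simp add: rl_blk ds_def)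
  have Bc: "B \<in> carrier_mat n n" by (simp add: B_def BMat_def lenB)
  have Ac: "map_mat (of_int :: int \<Rightarrow> complex) (A_mat n) \<in> carrier_mat n n" by (simp add: A_mat_def)
  have "det B = (\<Prod>d\<leftarrow>ds. det (mat (totient d) (totient d) (\<lambda>(i,j). pt (d,i) ^ j)))"
    unfolding B_def by (rule det_BMat[OF dds(1)])
  also have "\<dots> = (\<Prod>d\<leftarrow>ds. VP (totient d) (\<lambda>i. pt (d, i)))"
    by (simp add: det_vdm[unfolded vdm_def])
  also have "\<dots> = (\<Prod>d\<in>{d. d dvd n}. VP (totient d) (\<lambda>i. pt (d, i)))"
    using prod.distinct_set_conv_list[OF dds(1), of "\<lambda>d. VP (totient d) (\<lambda>i. pt (d, i))"] dds(2) by simp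
  finally have dB: "det B = (\<Prod>d\<in>{d. d dvd n}. VP (totient d) (\<lambda>i. pt (d, i)))" .
  have "det (B * map_mat of_int (A_mat n)) = det B * det (map_mat (of_int :: int \<Rightarrow> complex) (A_mat n))"
    by (rule det_mult[OF Bc Ac])
  moreover have "B * map_mat of_int (A_mat n) = vdm n (\<lambda>r. pt (row_labels n ! r))"
    unfolding B_def ds_def by (rule matrix_identity[OF n])
  ultimately have "det (vdm n (\<lambda>r. pt (row_labels n ! r))) = (\<Prod>d\<in>{d. d dvd n}. VP (totient d) (\<lambda>i. pt (d, i))) * of_int (det (A_mat n))"
    using dB by (simp add: of_int_hom.hom_det)
  then show ?thesis by (simp add: det_vdm)
qed

definition OD :: "nat \<Rightarrow> (nat \<times> nat) set" where "OD m = {(i,j). i < m \<and> j < m \<and> i \<noteq> j}"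
definition ODS :: "complex set \<Rightarrow> (complex \<times> complex) set" where "ODS S = {(a,b). a \<in> S \<and> b \<in> S \<and> a \<noteq> b}"

lemma VP_norm_sq:
  "cmod (VP m x) ^ 2 = (\<Prod>p\<in>OD m. cmod (x (fst p) - x (snd p)))"
proof -
  define LT where "LT = Sigma {..<m} (\<lambda>i. {..<i})"
  define UT where "UT = (\<lambda>(i,j). (j,i)) ` LT"
  have fLT: "finite LT" by (simp add: LT_def)
  have "cmod (VP m x) = (\<Prod>i<m. \<Prod>j<i. cmod (x i - x j))"
    by (simp add: VP_def prod_norm[symmetric])
  also have "\<dots> = (\<Prod>p\<in>LT. cmod (x (fst p) - x (snd p)))"
    unfolding LT_def by (subst prod.Sigma) (auto simp: case_prod_beta)
  finally have e1: "cmod (VP m x) = (\<Prod>p\<in>LT. cmod (x (fst p) - x (snd p)))" .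
  have "(\<Prod>p\<in>UT. cmod (x (fst p) - x (snd p))) = (\<Prod>p\<in>LT. cmod (x (snd p) - x (fst p)))"
    unfolding UT_def by (subst prod.reindex) (auto simp: inj_on_def case_prod_beta)
  also have "\<dots> = (\<Prod>p\<in>LT. cmod (x (fst p) - x (snd p)))" by (simp add: norm_minus_commute)
  finally have e2: "(\<Prod>p\<in>UT. cmod (x (fst p) - x (snd p))) = (\<Prod>p\<in>LT. cmod (x (fst p) - x (snd p)))" .
  have OD: "OD m = LT \<union> UT"
  proof
    show "OD m \<subseteq> LT \<union> UT"
    proof
      fix p assume p: "p \<in> OD m"
      obtain i j where ij: "p = (i, j)" by (cases p)
      show "p \<in> LT \<union> UT"
      proof (cases "j < i")
        case True then show ?thesis using p ij by (auto simp: OD_def LT_def)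
      next
        case False
        then have "(j, i) \<in> LT" using p ij by (auto simp: OD_def LT_def)
        then show ?thesis unfolding UT_def ij by (auto intro: image_eqI[where x = "(j,i)"])
      qed
    qed
    show "LT \<union> UT \<subseteq> OD m" by (auto simp: OD_def LT_def UT_def)
  qed
  have disj: "LT \<inter> UT = {}" by (auto simp: LT_def UT_def)
  have fUT: "finite UT" using fLT by (simp add: UT_def)
  have "(\<Prod>p\<in>OD m. cmod (x (fst p) - x (snd p))) =
      (\<Prod>p\<in>LT. cmod (x (fst p) - x (snd p))) * (\<Prod>p\<in>UT. cmod (x (fst p) - x (snd p)))"
    unfolding OD using fLT fUT disj by (rule prod.union_disjoint)
  then show ?thesis using e1 e2 by (simp add: power2_eq_square)
qed

lemma OD_reindex:
  assumes inj: "inj_on x {..<m}"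
  shows "(\<Prod>p\<in>OD m. cmod (x (fst p) - x (snd p))) = (\<Prod>q\<in>ODS (x ` {..<m}). cmod (fst q - snd q))"
proof -
  have b: "bij_betw (map_prod x x) (OD m) (ODS (x ` {..<m}))"
    unfolding bij_betw_def
  proof
    show "inj_on (map_prod x x) (OD m)"
      using inj unfolding inj_on_def OD_def by auto
    show "map_prod x x ` OD m = ODS (x ` {..<m})"
    proof
      show "map_prod x x ` OD m \<subseteq> ODS (x ` {..<m})"
        using inj unfolding OD_def ODS_def inj_on_def by auto
      show "ODS (x ` {..<m}) \<subseteq> map_prod x x ` OD m"
      proof
        fix q assume q: "q \<in> ODS (x ` {..<m})"
        then obtain i j where ij: "i < m" "j < m" "q = (x i, x j)" "x i \<noteq> x j" unfolding ODS_def by auto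
        then have "(i, j) \<in> OD m" by (auto simp: OD_def)
        then show "q \<in> map_prod x x ` OD m" using ij by (auto intro: image_eqI[where x = "(i,j)"])
      qed
    qed
  qed
  show ?thesis using prod.reindex_bij_betw[OF b, of "\<lambda>q. cmod (fst q - snd q)"] by simp
qed

definition Pd :: "nat \<Rightarrow> complex set" where "Pd d = (\<lambda>i. pt (d, i)) ` {..<totient d}"

lemma ODS_pos: "finite (ODS S) \<Longrightarrow> (\<Prod>q\<in>ODS S. cmod (fst q - snd q)) > 0"
  by (rule prod_pos) (auto simp: ODS_def)

lemma detA_sq:
  assumes n: "n > 0"
  shows "real_of_int (det (A_mat n)) ^ 2 = Fp n"
proof -
  define L where "L = row_labels n"
  define z where "z = (\<lambda>r. pt (L ! r))"
  have lenL: "length L = n" using rl_length[OF n] by (simp add: L_def)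
  have distL: "distinct L" using rl_distinct[OF n] by (simp add: L_def)
  have bL: "bij_betw ((!) L) {..<n} (set L)" using bij_betw_nth[OF distL refl refl] lenL by simp
  have injpt: "inj_on pt (set L)" using pt_inj_rl[OF n] by (simp add: L_def)
  have injz: "inj_on z {..<n}"
    unfolding z_def using comp_inj_on[of "(!) L" "{..<n}" pt] bL injpt
    by (simp add: bij_betw_def comp_def)
  have imz: "z ` {..<n} = U n"
  proof -
    have "z ` {..<n} = pt ` ((!) L ` {..<n})" by (auto simp: z_def)
    also have "(!) L ` {..<n} = set L" using bL by (simp add: bij_betw_def)
    finally show ?thesis using pt_image[OF n] by (simp add: L_def)
  qed
  have fin: "finite {d. d dvd n}" using n by simp
  have dpos: "d \<in> {d. d dvd n} \<Longrightarrow> d > 0" for d using n by (auto intro!: Nat.gr0I)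
  have inL: "d dvd n \<Longrightarrow> i < totient d \<Longrightarrow> (d, i) \<in> set L" for d i
    unfolding L_def rl_set[OF n] by simp
  have injd: "inj_on (\<lambda>i. pt (d, i)) {..<totient d}" if d: "d \<in> {d. d dvd n}" for d
    using pt_inj[of d d] dpos[OF d] by (auto simp: inj_on_def)
  have PdU: "Pd d \<subseteq> U n" if "d dvd n" for d using pt_U[OF n] inL that by (auto simp: Pd_def L_def)
  have fU: "finite (ODS (U n))" by (rule finite_subset[of _ "U n \<times> U n"]) (auto simp: ODS_def U_finite[OF n])
  have fPd: "finite (ODS (Pd d))" for d by (rule finite_subset[of _ "Pd d \<times> Pd d"]) (auto simp: ODS_def Pd_def)
  have simrPd: "simr a b" if h: "d dvd n" "a \<in> Pd d" "b \<in> Pd d" for d a b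
  proof -
    obtain i j where ij: "i < totient d" "j < totient d" "a = pt (d, i)" "b = pt (d, j)"
      using h by (auto simp: Pd_def)
    show ?thesis using pt_simr[OF n, of "(d,i)" "(d,j)"] inL[OF h(1) ij(1)] inL[OF h(1) ij(2)] ij
      by (simp add: L_def)
  qed
  define f where "f = (\<lambda>q::complex\<times>complex. cmod (fst q - snd q))"
  have dec: "ODS (U n) = SP n \<union> (\<Union>d\<in>{d. d dvd n}. ODS (Pd d))"
  proof
    show "ODS (U n) \<subseteq> SP n \<union> (\<Union>d\<in>{d. d dvd n}. ODS (Pd d))"
    proof
      fix q assume q: "q \<in> ODS (U n)"
      obtain a b where ab: "q = (a, b)" by (cases q)
      have abU: "a \<in> U n" "b \<in> U n" "a \<noteq> b" using q ab by (auto simp: ODS_def)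
      show "q \<in> SP n \<union> (\<Union>d\<in>{d. d dvd n}. ODS (Pd d))"
      proof (cases "simr a b")
        case False then show ?thesis using abU ab by (auto simp: SP_def)
      next
        case True
        have "a \<in> pt ` set L" "b \<in> pt ` set L" using abU pt_image[OF n] by (simp_all add: L_def)
        then obtain x y where x: "x \<in> set L" "a = pt x" and y: "y \<in> set L" "b = pt y" by blast
        have fxy: "fst x = fst y" using pt_simr[OF n, of x y] x y True by (simp add: L_def)
        have px: "fst x dvd n" "snd x < totient (fst x)" "snd y < totient (fst x)"
          using rl_pos[OF n, of x] rl_pos[OF n, of y] x y fxy by (simp_all add: L_def)
        have "a = pt (fst x, snd x)" using x(2) by simp
        moreover have "b = pt (fst x, snd y)" using y(2) fxy by (simp add: prod_eq_iff)
        ultimately have ea: "a = pt (fst x, snd x)" and eb: "b = pt (fst x, snd y)" by simp_all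
        have "a \<in> Pd (fst x)" unfolding Pd_def by (rule rev_image_eqI[of "snd x"]) (use px ea in simp_all)
        moreover have "b \<in> Pd (fst x)" unfolding Pd_def by (rule rev_image_eqI[of "snd y"]) (use px eb in simp_all)
        ultimately have "q \<in> ODS (Pd (fst x))" using ab abU by (simp add: ODS_def)
        then show ?thesis using px by blast
      qed
    qed
    show "SP n \<union> (\<Union>d\<in>{d. d dvd n}. ODS (Pd d)) \<subseteq> ODS (U n)"
      using SP_neq PdU by (fastforce simp: SP_def ODS_def)
  qed
  have disj1: "SP n \<inter> (\<Union>d\<in>{d. d dvd n}. ODS (Pd d)) = {}"
    using simrPd by (fastforce simp: SP_def ODS_def)
  have disj2: "\<forall>d\<in>{d. d dvd n}. \<forall>d'\<in>{d. d dvd n}. d \<noteq> d' \<longrightarrow> ODS (Pd d) \<inter> ODS (Pd d') = {}"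
  proof (intro ballI impI)
    fix d d' assume d: "d \<in> {d. d dvd n}" and d': "d' \<in> {d. d dvd n}" and ne: "d \<noteq> d'"
    show "ODS (Pd d) \<inter> ODS (Pd d') = {}"
    proof (rule ccontr)
      assume "ODS (Pd d) \<inter> ODS (Pd d') \<noteq> {}"
      then obtain a b where "(a, b) \<in> ODS (Pd d)" "(a, b) \<in> ODS (Pd d')" by auto
      then obtain i i' where "i < totient d" "i' < totient d'" "pt (d, i) = pt (d', i')"
        by (auto simp: ODS_def Pd_def)
      then show False using pt_inj[OF dpos[OF d] dpos[OF d']] ne by blast
    qed
  qed
  have fSP: "finite (SP n)" using SP_finite[OF n] .
  have "prod f (ODS (U n)) = prod f (SP n) * prod f (\<Union>d\<in>{d. d dvd n}. ODS (Pd d))"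
    unfolding dec using fSP fPd fin disj1 by (intro prod.union_disjoint) auto
  also have "prod f (\<Union>d\<in>{d. d dvd n}. ODS (Pd d)) = (\<Prod>d\<in>{d. d dvd n}. prod f (ODS (Pd d)))"
    using fin fPd disj2 by (intro prod.UNION_disjoint) auto
  finally have PU: "prod f (ODS (U n)) = Fp n * (\<Prod>d\<in>{d. d dvd n}. prod f (ODS (Pd d)))"
    by (simp add: Fp_def f_def)
  have W: "cmod (VP n z) ^ 2 = prod f (ODS (U n))"
    using VP_norm_sq[of n z] OD_reindex[OF injz] imz by (simp add: f_def)
  have Bd: "cmod (VP (totient d) (\<lambda>i. pt (d, i))) ^ 2 = prod f (ODS (Pd d))" if d: "d \<in> {d. d dvd n}" for d
    using VP_norm_sq[of "totient d" "\<lambda>i. pt (d, i)"] OD_reindex[OF injd[OF d]] by (simp add: f_def Pd_def)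
  have "cmod ((\<Prod>d\<in>{d. d dvd n}. VP (totient d) (\<lambda>i. pt (d, i))) * of_int (det (A_mat n))) ^ 2 = cmod (VP n z) ^ 2"
    using det_identity[OF n] by (simp add: z_def L_def)
  then have "(\<Prod>d\<in>{d. d dvd n}. cmod (VP (totient d) (\<lambda>i. pt (d, i))) ^ 2) * real_of_int (det (A_mat n)) ^ 2
      = cmod (VP n z) ^ 2"
    by (simp add: norm_mult prod_norm[symmetric] power_mult_distrib prod_power_distrib)
  also have "\<dots> = Fp n * (\<Prod>d\<in>{d. d dvd n}. cmod (VP (totient d) (\<lambda>i. pt (d, i))) ^ 2)"
    using W PU Bd by simp
  finally have eq: "Y * real_of_int (det (A_mat n)) ^ 2 = Fp n * Y"
    if "Y = (\<Prod>d\<in>{d. d dvd n}. cmod (VP (totient d) (\<lambda>i. pt (d, i))) ^ 2)" for Y using that by simp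
  have Ypos: "(\<Prod>d\<in>{d. d dvd n}. cmod (VP (totient d) (\<lambda>i. pt (d, i))) ^ 2) > 0"
    using Bd ODS_pos[OF fPd] by (intro prod_pos) (simp add: f_def)
  show ?thesis using eq[OF refl] Ypos by simp
qed

lemma ee_real:
  assumes p: "prime p" and n: "n > 0"
  shows "real (ee p n) = real n * (1 - real p powr (- real (multiplicity p n))) / (real p - 1)"
proof -
  define a where "a = multiplicity p n"
  define m where "m = n div p ^ a"
  have p1: "real p > 1" using prime_gt_1_nat[OF p] by simp
  have nm: "n = p ^ a * m" using multiplicity_dvd[of p n] by (simp add: a_def m_def)
  have "real (ee p n) = real m * (\<Sum>j<a. real p ^ j)" by (simp add: ee_def a_def[symmetric] m_def[symmetric])
  also have "(\<Sum>j<a. real p ^ j) = (real p ^ a - 1) / (real p - 1)" using p1 by (simp add: geometric_sum)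
  finally have e1: "real (ee p n) = real m * ((real p ^ a - 1) / (real p - 1))" .
  have pw: "real p powr (- real a) = inverse (real p ^ a)" using p1 by (simp add: powr_minus powr_realpow)
  have "real n * (1 - real p powr (- real a)) = real m * (real p ^ a - 1)"
    using p1 by (simp add: nm pw field_simps)
  then show ?thesis using e1 by (simp add: a_def[symmetric])
qed

theorem corollary2p9:
  fixes n :: nat
  assumes "n > 0"
  shows "real_of_int \<bar>det (A_mat n)\<bar> =
    (\<Prod>p\<in>prime_factors n.
       real p powr (real n * (1 - real p powr (- real (multiplicity p n))) / (real p - 1)))"
proof -
  have sq: "real_of_int \<bar>det (A_mat n)\<bar> ^ 2 = real (TT n) ^ 2"
    using detA_sq[OF assms] Fp_formula[OF assms] by simp
  have e: "real_of_int \<bar>det (A_mat n)\<bar> = real (TT n)"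
    using sq by (rule power2_eq_imp_eq) auto
  also have "real (TT n) = (\<Prod>p\<in>prime_factors n. real p ^ ee p n)"
    by (simp add: TT_def)
  also have "\<dots> = (\<Prod>p\<in>prime_factors n.
       real p powr (real n * (1 - real p powr (- real (multiplicity p n))) / (real p - 1)))"
  proof (rule prod.cong[OF refl])
    fix p assume "p \<in> prime_factors n"
    then have p: "prime p" by auto
    have "real p > 0" using prime_gt_0_nat[OF p] by simp
    then have "real p ^ ee p n = real p powr real (ee p n)" by (simp add: powr_realpow)
    then show "real p ^ ee p n = real p powr (real n * (1 - real p powr (- real (multiplicity p n))) / (real p - 1))"
      using ee_real[OF p assms] by simp
  qed
  finally show ?thesis .
qed

end
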